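(* Let $n\ge 1$, let $\boldsymbol{L}\in\mathbb{R}^{n\times n}$ be Hurwitz, and for $m=1,\dots,n$ let $\boldsymbol{R}_m\in\mathbb{R}^{n\times n}$ be symmetric. Define $\boldsymbol{\Upsilon}:\mathbb{R}^n\to\mathbb{R}^n$ by $\Upsilon_m(\boldsymbol{a})=\boldsymbol{a}^T\boldsymbol{R}_m\boldsymbol{a}$, and assume $\boldsymbol{a}^T\boldsymbol{\Upsilon}(\boldsymbol{a})=0$ for all $\boldsymbol{a}\in\mathbb{R}^n$. Let $\boldsymbol{n}\in\mathbb{R}^n$ be a fixed vector with $\boldsymbol{n}^T\boldsymbol{\Upsilon}(\boldsymbol{a})=0$ for all $\boldsymbol{a}$, and set $\boldsymbol{M}_0:=\boldsymbol{I}$, $\boldsymbol{M}_i:=\boldsymbol{e}_i\boldsymbol{n}^T$ ($i=1,\dots,n$), $\boldsymbol{T}_j:=\boldsymbol{e}_j\boldsymbol{n}^T+\boldsymbol{n}\boldsymbol{e}_j^T$ ($j=1,\dots,n$), where $\boldsymbol{e}_k$ is the $k$-th standard unit vector. Consider the input-output system $$\dot{\boldsymbol{a}}=\boldsymbol{L}\boldsymbol{a}+\boldsymbol{\Upsilon}(\boldsymbol{a})+\boldsymbol{f}(t),\qquad \boldsymbol{y}=\boldsymbol{a},\qquad \boldsymbol{a}(0)=\boldsymbol{a}_0,$$ with input $\boldsymbol{f}:[0,\infty)\to\mathbb{R}^n$. Let $\delta>0$. Suppose there exist a symmetric matrix $\boldsymbol{P}\in\mathbb{R}^{n\times n}$,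 a scalar $\varepsilon>0$, scalars $s_1,\dots,s_n\ge 0$, and real scalars $\mu_0,\dots,\mu_n$, $\kappa_1,\dots,\kappa_n$ such that $\boldsymbol{P}-\varepsilon\boldsymbol{I}\succeq 0$ and $\boldsymbol{G}\preceq 0$, where $$\boldsymbol{G}:=\begin{bmatrix}\boldsymbol{L}^T\boldsymbol{P}+\boldsymbol{P}\boldsymbol{L}+\varepsilon\boldsymbol{I}+\sum_{m=1}^n s_m\delta^2\boldsymbol{R}_m\boldsymbol{R}_m & \boldsymbol{P}+\sum_{i=0}^n\mu_i\boldsymbol{M}_i\\ \boldsymbol{P}+\sum_{i=0}^n\mu_i\boldsymbol{M}_i^T & -\sum_{m=1}^n s_m\boldsymbol{e}_m\boldsymbol{e}_m^T+\sum_{j=1}^n\kappa_j\boldsymbol{T}_j\end{bmatrix}.$$ Let $\lambda_{\min}(\boldsymbol{P}),\lambda_{\max}(\boldsymbol{P})$ be the extreme eigenvalues of $\boldsymbol{P}$ and $\|2\boldsymbol{P}\|$ the spectral norm of $2\boldsymbol{P}$. Then for each $\boldsymbol{a}_0$ with $\|\boldsymbol{a}_0\|\le\delta\sqrt{\lambda_{\min}(\boldsymbol{P})/\lambda_{\max}(\boldsymbol{P})}$ the system is small-signal finite-gain $\mathcal{L}_p$ stable for each $p\in[1,\infty]$. In particular, for each $\tau\ge0$ and each $\boldsymbol{f}\in\mathcal{L}_{pe}$ with $$\sup_{0\le t\le\tau}\|\boldsymbol{f}(t)\|\le \frac{\lambda_{\min}(\boldsymbol{P})\,\varepsilon\,\delta}{\lambda_{\max}(\boldsymbol{P})\,\|2\boldsymbol{P}\|},$$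 the state satisfies $\|\boldsymbol{a}(t)\|\le\delta$ for all $t\in[0,\tau]$ and the output satisfies $\|\boldsymbol{y}_\tau\|_{\mathcal{L}_p}\le\gamma\|\boldsymbol{f}_\tau\|_{\mathcal{L}_p}+\beta$, where $$\gamma=\frac{\lambda_{\max}(\boldsymbol{P})\|2\boldsymbol{P}\|}{\lambda_{\min}(\boldsymbol{P})\,\varepsilon},\qquad \beta=\|\boldsymbol{a}_0\|\sqrt{\frac{\lambda_{\max}(\boldsymbol{P})}{\lambda_{\min}(\boldsymbol{P})}}\,\rho,\qquad \rho=\begin{cases}1,&p=\infty,\\ \left(\frac{2\lambda_{\max}(\boldsymbol{P})}{\varepsilon p}\right)^{1/p},&p\in[1,\infty).\end{cases}$$
   Context: $\|\cdot\|$ denotes the Euclidean norm on $\mathbb{R}^n$. For a signal $\boldsymbol{g}:[0,\infty)\to\mathbb{R}^n$ and $\tau\ge0$, the truncation is $\boldsymbol{g}_\tau(t)=\boldsymbol{g}(t)$ for $0\le t\le\tau$ and $\boldsymbol{g}_\tau(t)=\boldsymbol{0}$ for $t>\tau$. For $p\in[1,\infty)$, $\|\boldsymbol{g}\|_{\mathcal{L}_p}=(\int_0^\infty\|\boldsymbol{g}(t)\|^p\,dt)^{1/p}$, and $\|\boldsymbol{g}\|_{\mathcal{L}_\infty}=\sup_{t\ge0}\|\boldsymbol{g}(t)\|$. $\mathcal{L}_p$ is the set of piecewise continuous $\boldsymbol{g}:[0,\infty)\to\mathbb{R}^n$ with finite $\mathcal{L}_p$ norm, and the extended space is $\mathcal{L}_{pe}=\{\boldsymbol{g}:\boldsymbol{g}_\tau\in\mathcal{L}_p\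 \forall\tau\in[0,\infty)\}$. A matrix is Hurwitz if all its eigenvalues have negative real part. "Small-signal finite-gain $\mathcal{L}_p$ stable" means there exist constants $r>0$, $\gamma\ge0$, $\beta\ge0$ such that every input with $\sup_{0\le t\le\tau}\|\boldsymbol{f}(t)\|\le r$ yields $\|\boldsymbol{y}_\tau\|_{\mathcal{L}_p}\le\gamma\|\boldsymbol{f}_\tau\|_{\mathcal{L}_p}+\beta$; the explicit bounds are given in the claim. *)

theory Defs
  imports "HOL-Analysis.Analysis"
begin

text \<open>Matrices are real^'n^'n (rows indexed first). Euclidean norm is the norm on real^'n.\<close>

definition cmat :: "real^'n^'m \<Rightarrow> complex^'n^'m" where
  "cmat A = (\<chi> i j. complex_of_real (A $ i $ j))"

definition hurwitz :: "real^'n^'n \<Rightarrow> bool" where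
  "hurwitz A \<longleftrightarrow> (\<forall>(lam::complex) (v::complex^'n). v \<noteq> 0 \<and> cmat A *v v = (\<chi> i. lam * v $ i) \<longrightarrow> Re lam < 0)"

definition symmetric_mat :: "real^'n^'n \<Rightarrow> bool" where
  "symmetric_mat A \<longleftrightarrow> transpose A = A"

definition psd :: "real^'n^'n \<Rightarrow> bool" where
  "psd A \<longleftrightarrow> (\<forall>x. 0 \<le> x \<bullet> (A *v x))"

definition nsd :: "real^'n^'n \<Rightarrow> bool" where
  "nsd A \<longleftrightarrow> (\<forall>x. x \<bullet> (A *v x) \<le> 0)"

definition outer :: "real^'n \<Rightarrow> real^'m \<Rightarrow> real^'m^'n" where
  "outer u v = (\<chi> i j. u $ i * v $ j)"

definition block :: "real^'n^'n \<Rightarrow> real^'n^'n \<Rightarrow> real^'n^'n \<Rightarrow> real^'n^'n \<Rightarrow> real^('n+'n)^('n+'n)" where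
  "block A B C D = (\<chi> i j. (case i of
       Inl i' \<Rightarrow> (case j of Inl j' \<Rightarrow> A $ i' $ j' | Inr j' \<Rightarrow> B $ i' $ j')
     | Inr i' \<Rightarrow> (case j of Inl j' \<Rightarrow> C $ i' $ j' | Inr j' \<Rightarrow> D $ i' $ j')))"

text \<open>Real eigenvalues; for symmetric matrices these are all eigenvalues.\<close>
definition real_eigenvalues :: "real^'n^'n \<Rightarrow> real set" where
  "real_eigenvalues A = {lam. \<exists>v. v \<noteq> 0 \<and> A *v v = lam *\<^sub>R v}"

definition lambda_min :: "real^'n^'n \<Rightarrow> real" where
  "lambda_min A = Min (real_eigenvalues A)"

definition lambda_max :: "real^'n^'n \<Rightarrow> real" where
  "lambda_max A = Max (real_eigenvalues A)"

text \<open>Spectral norm = operator norm induced by the Euclidean norm.\<close>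
definition spec_norm :: "real^'n^'n \<Rightarrow> real" where
  "spec_norm A = onorm (\<lambda>x. A *v x)"

definition Upsilon :: "('n \<Rightarrow> real^'n^'n) \<Rightarrow> real^'n \<Rightarrow> real^'n" where
  "Upsilon R a = (\<chi> m. a \<bullet> (R m *v a))"

definition trunc :: "real \<Rightarrow> (real \<Rightarrow> real^'n) \<Rightarrow> real \<Rightarrow> real^'n" where
  "trunc \<tau> g t = (if 0 \<le> t \<and> t \<le> \<tau> then g t else 0)"

definition Lp_norm :: "real \<Rightarrow> (real \<Rightarrow> real^'n) \<Rightarrow> real" where
  "Lp_norm p g = (integral {0..} (\<lambda>t. norm (g t) powr p)) powr (1 / p)"

definition Linf_norm :: "(real \<Rightarrow> real^'n) \<Rightarrow> real" where
  "Linf_norm g = (SUP t\<in>{0..}. norm (g t))"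

definition piecewise_continuous :: "(real \<Rightarrow> real^'n) \<Rightarrow> bool" where
  "piecewise_continuous f \<longleftrightarrow> (\<forall>T\<ge>0. \<exists>D. finite D \<and>
      (\<forall>t\<in>{0..T} - D. continuous (at t within {0..}) f) \<and>
      (\<forall>t\<in>D. (t > 0 \<longrightarrow> (\<exists>l. (f \<longlongrightarrow> l) (at_left t))) \<and> (\<exists>l. (f \<longlongrightarrow> l) (at_right t))))"

text \<open>a solves a' = L a + Upsilon(a) + f(t), a(0) = a0 on [0,tau] (integral / Caratheodory sense).\<close>
definition is_solution :: "real^'n^'n \<Rightarrow> ('n \<Rightarrow> real^'n^'n) \<Rightarrow> (real \<Rightarrow> real^'n) \<Rightarrow> real^'n \<Rightarrow> real \<Rightarrow> (real \<Rightarrow> real^'n) \<Rightarrow> bool" where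
  "is_solution L R f a0 \<tau> a \<longleftrightarrow> a 0 = a0 \<and> continuous_on {0..\<tau>} a \<and>
     (\<forall>t\<in>{0..\<tau>}. ((\<lambda>s. L *v a s + Upsilon R (a s) + f s) has_integral (a t - a0)) {0..t})"

end

theory Submission
  imports Defs
begin

lemma mv_sum: "(sum F S) *v (x::real^'n) = (\<Sum>i\<in>S. F i *v x)"
  for F :: "'k \<Rightarrow> real^'n^'m"
  by (induction S rule: infinite_finite_induct) (auto simp: matrix_vector_mult_add_rdistrib)

lemma mv_scale: "(c *\<^sub>R A) *v (x::real^'n) = c *\<^sub>R (A *v x)" for A :: "real^'n^'m"
  by (simp add: scaleR_matrix_vector_assoc)

lemma mv_neg: "(- A) *v (x::real^'n) = - (A *v x)" for A :: "real^'n^'m"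
  by (simp add: matrix_vector_mult_def vec_eq_iff sum_negf)

lemma outer_mv: "outer u v *v y = (v \<bullet> y) *\<^sub>R u"
  by (simp add: outer_def matrix_vector_mult_def inner_vec_def vec_eq_iff sum_distrib_left mult.commute mult.left_commute)

lemma transpose_outer: "transpose (outer u v) = outer v u"
  by (simp add: outer_def transpose_def vec_eq_iff)

lemma inner_transpose: "x \<bullet> (transpose A *v y) = (A *v x) \<bullet> y" for A :: "real^'n^'m"
proof -
  have "x \<bullet> (transpose A *v y) = (\<Sum>i\<in>UNIV. \<Sum>j\<in>UNIV. x$i * (A$j$i * y$j))"
    by (simp add: inner_vec_def matrix_vector_mult_def transpose_def sum_distrib_left)
  also have "\<dots> = (\<Sum>j\<in>UNIV. \<Sum>i\<in>UNIV. x$i * (A$j$i * y$j))" by (rule sum.swap)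
  also have "\<dots> = (A *v x) \<bullet> y"
    by (simp add: inner_vec_def matrix_vector_mult_def sum_distrib_right sum_distrib_left mult_ac)
  finally show ?thesis .
qed

lemma sym_inner: "symmetric_mat P \<Longrightarrow> x \<bullet> (P *v y) = y \<bullet> (P *v x)"
proof -
  assume "symmetric_mat P"
  then have "x \<bullet> (P *v y) = x \<bullet> (transpose P *v y)" by (simp add: symmetric_mat_def)
  also have "\<dots> = (P *v x) \<bullet> y" by (rule inner_transpose)
  also have "\<dots> = y \<bullet> (P *v x)" by (rule inner_commute)
  finally show ?thesis .
qed

definition vjoin :: "real^'n \<Rightarrow> real^'n \<Rightarrow> real^('n+'n)" where
  "vjoin x y = (\<chi> k. case k of Inl i \<Rightarrow> x $ i | Inr i \<Rightarrow> y $ i)"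

lemma sum_Plus_UNIV: "sum g (UNIV :: ('n+'n) set) = (\<Sum>i\<in>UNIV. g (Inl i)) + (\<Sum>i\<in>UNIV. g (Inr i))"
  for g :: "'n::finite+'n \<Rightarrow> real"
proof -
  have "sum g (UNIV :: ('n+'n) set) = sum g (UNIV <+> UNIV)" by simp
  also have "\<dots> = sum (g \<circ> Inl) UNIV + sum (g \<circ> Inr) UNIV" by (rule sum.Plus) auto
  finally show ?thesis by (simp add: o_def)
qed

lemma inner_vjoin: "vjoin x y \<bullet> vjoin u v = x \<bullet> u + y \<bullet> v"
  unfolding inner_vec_def
  by (subst sum_Plus_UNIV) (simp add: vjoin_def)

lemma block_mv: "block A B C D *v vjoin x y = vjoin (A *v x + B *v y) (C *v x + D *v y)"
proof -
  have "(block A B C D *v vjoin x y) $ k = vjoin (A *v x + B *v y) (C *v x + D *v y) $ k" for k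
    unfolding matrix_vector_mult_def
    apply (subst vec_lambda_beta)
    apply (subst sum_Plus_UNIV)
    apply (cases k)
     apply (simp_all add: vjoin_def block_def matrix_vector_mult_def)
    done
  then show ?thesis by (simp add: vec_eq_iff)
qed

lemma block_quad:
  "vjoin x y \<bullet> (block A B C D *v vjoin x y) = x \<bullet> (A *v x) + x \<bullet> (B *v y) + y \<bullet> (C *v x) + y \<bullet> (D *v y)"
  by (simp add: block_mv inner_vjoin inner_add_right)

lemma axis_inner_real: "axis i c \<bullet> x = c * x $ i" for x :: "real^'n"
  by (simp add: inner_axis')

lemma key_ineq:
  fixes L P :: "real^'n^'n" and R :: "'n \<Rightarrow> real^'n^'n" and nv :: "real^'n"
    and \<delta> \<epsilon> \<mu>0 :: real and s \<mu> \<kappa> :: "'n \<Rightarrow> real"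
  assumes Rsym: "\<And>m. symmetric_mat (R m)"
    and energy: "\<And>x. x \<bullet> Upsilon R x = 0"
    and nvec: "\<And>x. nv \<bullet> Upsilon R x = 0"
    and Psym: "symmetric_mat P"
    and G_lmi: "nsd (block
        (transpose L ** P + P ** L + \<epsilon> *\<^sub>R mat 1 + (\<Sum>m\<in>UNIV. (s m * \<delta>\<^sup>2) *\<^sub>R (R m ** R m)))
        (P + \<mu>0 *\<^sub>R mat 1 + (\<Sum>i\<in>UNIV. \<mu> i *\<^sub>R outer (axis i 1) nv))
        (P + \<mu>0 *\<^sub>R transpose (mat 1) + (\<Sum>i\<in>UNIV. \<mu> i *\<^sub>R transpose (outer (axis i 1) nv)))
        (- (\<Sum>m\<in>UNIV. s m *\<^sub>R outer (axis m 1) (axis m 1))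
           + (\<Sum>j\<in>UNIV. \<kappa> j *\<^sub>R (outer (axis j 1) nv + outer nv (axis j 1)))))"
  shows "2 * (x \<bullet> (P *v (L *v x))) + \<epsilon> * (x \<bullet> x) + (\<Sum>m\<in>UNIV. s m * \<delta>\<^sup>2 * ((R m *v x) \<bullet> (R m *v x)))
     + 2 * (x \<bullet> (P *v Upsilon R x)) - (\<Sum>m\<in>UNIV. s m * (Upsilon R x $ m)\<^sup>2) \<le> 0"
proof -
  define y where "y = Upsilon R x"
  have xy: "x \<bullet> y = 0" "y \<bullet> x = 0" "nv \<bullet> y = 0" "y \<bullet> nv = 0"
    using energy nvec by (auto simp: y_def inner_commute)
  have t1: "x \<bullet> ((transpose L ** P + P ** L + \<epsilon> *\<^sub>R mat 1 + (\<Sum>m\<in>UNIV. (s m * \<delta>\<^sup>2) *\<^sub>R (R m ** R m))) *v x)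
     = 2 * (x \<bullet> (P *v (L *v x))) + \<epsilon> * (x \<bullet> x) + (\<Sum>m\<in>UNIV. s m * \<delta>\<^sup>2 * ((R m *v x) \<bullet> (R m *v x)))"
  proof -
    have a: "x \<bullet> (transpose L *v (P *v x)) = x \<bullet> (P *v (L *v x))"
      by (metis inner_transpose Psym sym_inner inner_commute)
    have b: "x \<bullet> (R m *v (R m *v x)) = (R m *v x) \<bullet> (R m *v x)" for m
      by (metis Rsym sym_inner)
    show ?thesis
      by (simp add: matrix_vector_mult_add_rdistrib mv_sum mv_scale inner_add_right inner_sum_right
          flip: matrix_vector_mul_assoc add: a b mult.assoc del: transpose_matrix_vector)
  qed
  have t2: "x \<bullet> ((P + \<mu>0 *\<^sub>R mat 1 + (\<Sum>i\<in>UNIV. \<mu> i *\<^sub>R outer (axis i 1) nv)) *v y) = x \<bullet> (P *v y)"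
    by (simp add: matrix_vector_mult_add_rdistrib mv_sum mv_scale inner_add_right inner_sum_right outer_mv xy)
  have t3: "y \<bullet> ((P + \<mu>0 *\<^sub>R transpose (mat 1) + (\<Sum>i\<in>UNIV. \<mu> i *\<^sub>R transpose (outer (axis i 1) nv))) *v x) = x \<bullet> (P *v y)"
    by (simp add: matrix_vector_mult_add_rdistrib mv_sum mv_scale inner_add_right inner_sum_right outer_mv
        transpose_outer xy sym_inner[OF Psym, of y x])
  have t4: "y \<bullet> ((- (\<Sum>m\<in>UNIV. s m *\<^sub>R outer (axis m 1) (axis m 1))
           + (\<Sum>j\<in>UNIV. \<kappa> j *\<^sub>R (outer (axis j 1) nv + outer nv (axis j 1)))) *v y) = - (\<Sum>m\<in>UNIV. s m * (y $ m)\<^sup>2)"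
  proof -
    have e: "(- (\<Sum>m\<in>UNIV. s m *\<^sub>R outer (axis m 1) (axis m 1))
           + (\<Sum>j\<in>UNIV. \<kappa> j *\<^sub>R (outer (axis j 1) nv + outer nv (axis j 1)))) *v y
       = - (\<Sum>m\<in>UNIV. s m *\<^sub>R ((axis m 1 \<bullet> y) *\<^sub>R axis m 1))
         + (\<Sum>j\<in>UNIV. \<kappa> j *\<^sub>R ((nv \<bullet> y) *\<^sub>R axis j 1 + (axis j 1 \<bullet> y) *\<^sub>R nv))"
      by (simp only: matrix_vector_mult_add_rdistrib mv_neg mv_sum mv_scale outer_mv)
    have f: "y \<bullet> (s m *\<^sub>R ((axis m 1 \<bullet> y) *\<^sub>R axis m 1)) = s m * (y $ m)\<^sup>2" for m
      by (simp add: axis_inner_real inner_axis power2_eq_square)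
    have g: "y \<bullet> (\<kappa> j *\<^sub>R ((nv \<bullet> y) *\<^sub>R axis j 1 + (axis j 1 \<bullet> y) *\<^sub>R nv)) = 0" for j
      by (simp add: inner_add_right xy)
    show ?thesis unfolding e inner_add_right inner_minus_right inner_sum_right f g by simp
  qed
  note H = G_lmi[unfolded nsd_def, THEN spec[where x="vjoin x y"], unfolded block_quad t1 t2 t3 t4]
  have "2 * (x \<bullet> (P *v (L *v x))) + \<epsilon> * (x \<bullet> x) + (\<Sum>m\<in>UNIV. s m * \<delta>\<^sup>2 * ((R m *v x) \<bullet> (R m *v x)))
     + 2 * (x \<bullet> (P *v y)) - (\<Sum>m\<in>UNIV. s m * (y $ m)\<^sup>2) \<le> 0"
    using H by linarith
  then show ?thesis by (simp only: y_def)
qed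

lemma quad_zero_lin:
  fixes b c :: real
  assumes "\<And>t. 0 \<le> 2 * t * b + t\<^sup>2 * c"
  shows "b = 0"
proof (rule ccontr)
  assume nb: "b \<noteq> 0"
  define t where "t = - b / (\<bar>c\<bar> + 1)"
  have d: "\<bar>c\<bar> + 1 > 0" by simp
  have "2 * t * b = - 2 * b\<^sup>2 / (\<bar>c\<bar> + 1)" by (simp add: t_def power2_eq_square)
  moreover have "t\<^sup>2 * c \<le> b\<^sup>2 / (\<bar>c\<bar> + 1)"
  proof -
    have "t\<^sup>2 * c \<le> t\<^sup>2 * \<bar>c\<bar>" by (simp add: mult_left_mono)
    also have "\<dots> = b\<^sup>2 * \<bar>c\<bar> / (\<bar>c\<bar> + 1)\<^sup>2" by (simp add: t_def power_divide)
    also have "\<dots> \<le> b\<^sup>2 * (\<bar>c\<bar> + 1) / (\<bar>c\<bar> + 1)\<^sup>2"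
      by (intro divide_right_mono mult_left_mono) auto
    also have "\<dots> = b\<^sup>2 / (\<bar>c\<bar> + 1)" by (simp add: power2_eq_square)
    finally show ?thesis .
  qed
  moreover have "b\<^sup>2 / (\<bar>c\<bar> + 1) > 0" using nb d by simp
  ultimately have "2 * t * b + t\<^sup>2 * c < 0" by linarith
  with assms[of t] show False by linarith
qed

lemma cont_quad: "continuous_on S (\<lambda>x. x \<bullet> (P *v x))" for P :: "real^'n^'n"
  by (intro continuous_intros linear_continuous_on matrix_vector_mul_bounded_linear)

lemma rayleigh_min:
  fixes P :: "real^'n^'n"
  assumes sym: "symmetric_mat P"
  obtains u where "norm u = 1" "P *v u = (u \<bullet> (P *v u)) *\<^sub>R u"
    "\<And>x. (u \<bullet> (P *v u)) * (x \<bullet> x) \<le> x \<bullet> (P *v x)"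
proof -
  have "axis undefined 1 \<in> sphere (0::real^'n) 1" by simp
  then have "sphere (0::real^'n) 1 \<noteq> {}" by blast
  then obtain u where u: "u \<in> sphere 0 1" and umin: "\<And>y. y \<in> sphere 0 1 \<Longrightarrow> u \<bullet> (P *v u) \<le> y \<bullet> (P *v y)"
    using continuous_attains_inf[OF compact_sphere _ cont_quad] by blast
  define m where "m = u \<bullet> (P *v u)"
  have nu: "norm u = 1" using u by simp
  have lb: "m * (x \<bullet> x) \<le> x \<bullet> (P *v x)" for x
  proof (cases "x = 0")
    case True then show ?thesis by simp
  next
    case False
    define z where "z = (1 / norm x) *\<^sub>R x"
    have "z \<in> sphere 0 1" using False by (simp add: z_def)
    then have "m \<le> z \<bullet> (P *v z)" using umin m_def by blast
    also have "z \<bullet> (P *v z) = (x \<bullet> (P *v x)) / (norm x)\<^sup>2"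
      by (simp add: z_def matrix_vector_mult_scaleR power2_eq_square)
    finally have "m * (norm x)\<^sup>2 \<le> x \<bullet> (P *v x)" using False by (simp add: field_simps)
    then show ?thesis by (simp add: power2_norm_eq_inner)
  qed
  have uu: "u \<bullet> u = 1" using nu by (simp add: power2_norm_eq_inner[symmetric])
  have bz: "v \<bullet> (P *v u) - m * (v \<bullet> u) = 0" for v
  proof (rule quad_zero_lin)
    fix t :: real
    have e1: "(u + t *\<^sub>R v) \<bullet> (P *v (u + t *\<^sub>R v)) = u \<bullet> (P *v u) + t * (u \<bullet> (P *v v)) + t * (v \<bullet> (P *v u)) + t * t * (v \<bullet> (P *v v))"
      by (simp add: matrix_vector_right_distrib matrix_vector_mult_scaleR inner_add_left inner_add_right distrib_left)
    have e2: "(u + t *\<^sub>R v) \<bullet> (u + t *\<^sub>R v) = u \<bullet> u + t * (u \<bullet> v) + t * (v \<bullet> u) + t * t * (v \<bullet> v)"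
      by (simp add: inner_add_left inner_add_right distrib_left)
    have s1: "u \<bullet> (P *v v) = v \<bullet> (P *v u)" by (rule sym_inner[OF sym])
    have s2: "u \<bullet> v = v \<bullet> u" by (rule inner_commute)
    have e: "(u + t *\<^sub>R v) \<bullet> (P *v (u + t *\<^sub>R v)) - m * ((u + t *\<^sub>R v) \<bullet> (u + t *\<^sub>R v))
      = (u \<bullet> (P *v u) - m * (u \<bullet> u)) + 2 * t * (v \<bullet> (P *v u) - m * (v \<bullet> u)) + t\<^sup>2 * (v \<bullet> (P *v v) - m * (v \<bullet> v))"
      unfolding e1 e2 s1 s2 by (simp add: power2_eq_square algebra_simps)
    have "0 \<le> (u + t *\<^sub>R v) \<bullet> (P *v (u + t *\<^sub>R v)) - m * ((u + t *\<^sub>R v) \<bullet> (u + t *\<^sub>R v))"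
      using lb[of "u + t *\<^sub>R v"] by simp
    then show "0 \<le> 2 * t * (v \<bullet> (P *v u) - m * (v \<bullet> u)) + t\<^sup>2 * (v \<bullet> (P *v v) - m * (v \<bullet> v))"
      unfolding e using uu m_def by simp
  qed
  define w where "w = P *v u - m *\<^sub>R u"
  have "w \<bullet> w = 0" using bz[of w] by (simp add: w_def inner_diff_right)
  then have Pu: "P *v u = m *\<^sub>R u" by (simp add: w_def)
  show ?thesis
  proof (rule that)
    show "norm u = 1" by (rule nu)
    show "P *v u = (u \<bullet> (P *v u)) *\<^sub>R u" using Pu unfolding m_def .
    show "(u \<bullet> (P *v u)) * (x \<bullet> x) \<le> x \<bullet> (P *v x)" for x using lb unfolding m_def .
  qed
qed

lemma eig_finite:
  fixes P :: "real^'n^'n"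
  assumes sym: "symmetric_mat P"
  shows "finite (real_eigenvalues P)"
proof -
  define E where "E = real_eigenvalues P"
  define v where "v = (\<lambda>l. SOME w. w \<noteq> 0 \<and> P *v w = l *\<^sub>R w)"
  have v: "v l \<noteq> 0 \<and> P *v v l = l *\<^sub>R v l" if "l \<in> E" for l
  proof -
    from that obtain w where "w \<noteq> 0 \<and> P *v w = l *\<^sub>R w" unfolding E_def real_eigenvalues_def by blast
    then show ?thesis unfolding v_def by (rule someI)
  qed
  have inj: "inj_on v E"
  proof
    fix l1 l2 assume a: "l1 \<in> E" "l2 \<in> E" "v l1 = v l2"
    have e1: "P *v v l1 = l1 *\<^sub>R v l1" using v[OF a(1)] by blast
    have e2: "P *v v l1 = l2 *\<^sub>R v l1" using v[OF a(2)] unfolding a(3)[symmetric] by blast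
    have "(l1 - l2) *\<^sub>R v l1 = 0" using trans[OF e1[symmetric] e2] by (simp add: scaleR_diff_left)
    moreover have "v l1 \<noteq> 0" using v[OF a(1)] by blast
    ultimately show "l1 = l2" by simp
  qed
  have orth: "pairwise orthogonal (v ` E)"
    unfolding pairwise_def
  proof (clarify)
    fix l1 l2 assume a: "l1 \<in> E" "l2 \<in> E" "v l1 \<noteq> v l2"
    then have ne: "l1 \<noteq> l2" by auto
    have "l1 * (v l1 \<bullet> v l2) = (P *v v l1) \<bullet> v l2" using v[OF a(1)] by simp
    also have "\<dots> = v l1 \<bullet> (P *v v l2)" by (simp only: inner_commute[of "P *v v l1" "v l2"] sym_inner[OF sym, of "v l2" "v l1"])
    also have "\<dots> = l2 * (v l1 \<bullet> v l2)" using v[OF a(2)] by simp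
    finally have "(l1 - l2) * (v l1 \<bullet> v l2) = 0" by (simp add: algebra_simps)
    then show "orthogonal (v l1) (v l2)" using ne by (simp add: orthogonal_def)
  qed
  have "0 \<notin> v ` E" using v by auto
  then have "independent (v ` E)" using pairwise_orthogonal_independent orth by blast
  then have "finite (v ` E)" using independent_bound by blast
  then show ?thesis using finite_imageD inj E_def by blast
qed

lemma eig_bounds:
  fixes P :: "real^'n^'n"
  assumes sym: "symmetric_mat P"
  shows "\<And>x. lambda_min P * (x \<bullet> x) \<le> x \<bullet> (P *v x)"
    and "\<And>x. x \<bullet> (P *v x) \<le> lambda_max P * (x \<bullet> x)"
    and "\<exists>u. norm u = 1 \<and> u \<bullet> (P *v u) = lambda_min P"
    and "\<exists>u. norm u = 1 \<and> u \<bullet> (P *v u) = lambda_max P"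
proof -
  have fin: "finite (real_eigenvalues P)" using eig_finite[OF sym] .
  obtain u where u: "norm u = 1" "P *v u = (u \<bullet> (P *v u)) *\<^sub>R u" "\<And>x. (u \<bullet> (P *v u)) * (x \<bullet> x) \<le> x \<bullet> (P *v x)"
    using rayleigh_min[OF sym] by blast
  define m where "m = u \<bullet> (P *v u)"
  have u2: "P *v u = m *\<^sub>R u" unfolding m_def by (rule u(2))
  have u3: "m * (x \<bullet> x) \<le> x \<bullet> (P *v x)" for x unfolding m_def by (rule u(3))
  have "m \<in> real_eigenvalues P" unfolding real_eigenvalues_def
  proof (intro CollectI exI conjI)
    show "u \<noteq> 0" using u(1) by auto
    show "P *v u = m *\<^sub>R u" by (rule u2)
  qed
  moreover have "m \<le> l" if "l \<in> real_eigenvalues P" for l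
  proof -
    have "\<exists>w. w \<noteq> 0 \<and> P *v w = l *\<^sub>R w" using that by (simp add: real_eigenvalues_def)
    then obtain w where w0: "w \<noteq> 0 \<and> P *v w = l *\<^sub>R w" ..
    have w: "w \<noteq> 0" "P *v w = l *\<^sub>R w" using w0 by auto
    have "m * (w \<bullet> w) \<le> l * (w \<bullet> w)" using u3[of w] w(2) by simp
    moreover have "w \<bullet> w > 0" using w by simp
    ultimately show ?thesis by (rule mult_right_le_imp_le)
  qed
  ultimately have mn: "lambda_min P = m"
    unfolding lambda_min_def using fin by (intro Min_eqI) auto
  show "\<And>x. lambda_min P * (x \<bullet> x) \<le> x \<bullet> (P *v x)" using u3 mn by simp
  show "\<exists>u. norm u = 1 \<and> u \<bullet> (P *v u) = lambda_min P" using u(1) mn m_def by auto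
  have tn: "transpose (- P) = - transpose P" by (simp add: transpose_def vec_eq_iff)
  have symn: "symmetric_mat (- P)" using sym unfolding symmetric_mat_def tn by simp
  obtain u' where u': "norm u' = 1" "(- P) *v u' = (u' \<bullet> ((- P) *v u')) *\<^sub>R u'" "\<And>x. (u' \<bullet> ((- P) *v u')) * (x \<bullet> x) \<le> x \<bullet> ((- P) *v x)"
    using rayleigh_min[OF symn] by blast
  define M where "M = u' \<bullet> (P *v u')"
  have MM: "u' \<bullet> ((- P) *v u') = - M" by (simp add: M_def mv_neg inner_minus_right)
  have u'2a: "(- P) *v u' = (- M) *\<^sub>R u'" using u'(2) unfolding MM .
  have u'2: "P *v u' = M *\<^sub>R u'"
  proof -
    have "- (P *v u') = - (M *\<^sub>R u')" using u'2a by (simp add: mv_neg)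
    then show ?thesis by simp
  qed
  have u'3: "x \<bullet> (P *v x) \<le> M * (x \<bullet> x)" for x
  proof -
    have "(- M) * (x \<bullet> x) \<le> x \<bullet> ((- P) *v x)" using u'(3)[of x] unfolding MM .
    then show ?thesis by (simp add: mv_neg inner_minus_right)
  qed
  have "M \<in> real_eigenvalues P" unfolding real_eigenvalues_def
  proof (intro CollectI exI conjI)
    show "u' \<noteq> 0" using u'(1) by auto
    show "P *v u' = M *\<^sub>R u'" by (rule u'2)
  qed
  moreover have "l \<le> M" if "l \<in> real_eigenvalues P" for l
  proof -
    have "\<exists>w. w \<noteq> 0 \<and> P *v w = l *\<^sub>R w" using that by (simp add: real_eigenvalues_def)
    then obtain w where w0: "w \<noteq> 0 \<and> P *v w = l *\<^sub>R w" ..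
    have w: "w \<noteq> 0" "P *v w = l *\<^sub>R w" using w0 by auto
    have "l * (w \<bullet> w) \<le> M * (w \<bullet> w)" using u'3[of w] w(2) by simp
    moreover have "w \<bullet> w > 0" using w by simp
    ultimately show "l \<le> M" by (rule mult_right_le_imp_le)
  qed
  ultimately have mx: "lambda_max P = M"
    unfolding lambda_max_def using fin by (intro Max_eqI) auto
  show "\<And>x. x \<bullet> (P *v x) \<le> lambda_max P * (x \<bullet> x)" using u'3 mx by simp
  show "\<exists>u. norm u = 1 \<and> u \<bullet> (P *v u) = lambda_max P" using u'(1) mx M_def by auto
qed

lemma ftc_le:
  fixes h h' k :: "real \<Rightarrow> real"
  assumes xy: "x \<le> y" and S: "finite S" and hc: "continuous_on {x..y} h"
    and hd: "\<And>t. t \<in> {x<..<y} - S \<Longrightarrow> (h has_real_derivative h' t) (at t)"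
    and hk: "\<And>t. t \<in> {x<..<y} - S \<Longrightarrow> h' t \<le> k t"
    and ki: "k integrable_on {x..y}"
  shows "h y - h x \<le> integral {x..y} k"
proof -
  have i1: "(h' has_integral (h y - h x)) {x..y}"
    using fundamental_theorem_of_calculus_interior_strong[OF S xy _ hc] hd
    by (simp add: has_real_derivative_iff_has_vector_derivative)
  define h2 where "h2 = (\<lambda>t. if t \<in> S \<union> {x, y} then k t else h' t)"
  have i2: "(h2 has_integral (h y - h x)) {x..y}"
    by (rule has_integral_spike_finite[OF _ _ i1, of "S \<union> {x,y}"]) (use S in \<open>auto simp: h2_def\<close>)
  show ?thesis
  proof (rule has_integral_le[OF i2 integrable_integral[OF ki]])
    fix t assume "t \<in> {x..y}"
    then show "h2 t \<le> k t" using hk by (cases "t \<in> S \<union> {x, y}") (auto simp: h2_def)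
  qed
qed

lemma ftc_decr:
  fixes h h' :: "real \<Rightarrow> real"
  assumes xy: "x \<le> y" and S: "finite S" and hc: "continuous_on {x..y} h"
    and hd: "\<And>t. t \<in> {x<..<y} - S \<Longrightarrow> (h has_real_derivative h' t) (at t)"
    and hk: "\<And>t. t \<in> {x<..<y} - S \<Longrightarrow> h' t \<le> 0"
  shows "h y \<le> h x"
proof -
  have "h y - h x \<le> integral {x..y} (\<lambda>_. 0::real)"
    by (rule ftc_le[OF xy S hc hd]) (use hk in auto)
  then show ?thesis by simp
qed

lemma scalar_Linf:
  fixes V V' \<phi> :: "real \<Rightarrow> real"
  assumes tau: "0 \<le> \<tau>" and D: "finite D" and Vc: "continuous_on {0..\<tau>} V"
    and Vpos: "\<And>t. t \<in> {0..\<tau>} \<Longrightarrow> 0 \<le> V t"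
    and Vd: "\<And>t. t \<in> {0<..<\<tau>} - D \<Longrightarrow> (V has_real_derivative V' t) (at t)"
    and Vineq: "\<And>t. t \<in> {0<..<\<tau>} - D \<Longrightarrow> V' t \<le> -2*c*V t + 2*k* sqrt(V t)*\<phi> t"
    and c: "c > 0" and k: "k \<ge> 0" and phi: "\<And>t. t \<in> {0..\<tau>} \<Longrightarrow> 0 \<le> \<phi> t \<and> \<phi> t \<le> \<Phi>"
    and t: "t \<in> {0..\<tau>}"
  shows "sqrt (V t) \<le> sqrt (V 0) + (k/c) * \<Phi>"
proof -
  have main: "sqrt (V t) \<le> sqrt (V 0) + (k/c) * \<Phi> + 2 * sqrt \<eta>" if eta: "\<eta> > 0" for \<eta>
  proof -
    define U where "U = (\<lambda>s. sqrt (V s + \<eta>))"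
    define M where "M = sqrt \<eta> + (k/c) * \<Phi>"
    define Z where "Z = (\<lambda>s. exp (c * s) * (U s - M))"
    define U' where "U' = (\<lambda>s. inverse (sqrt (V s + \<eta>)) / 2 * V' s)"
    define Z' where "Z' = (\<lambda>s. exp (c * s) * c * (U s - M) + exp (c * s) * U' s)"
    have tt: "0 \<le> t" "t \<le> \<tau>" using t by auto
    have Upos: "U s \<ge> sqrt \<eta>" if "s \<in> {0..\<tau>}" for s
      unfolding U_def using Vpos[OF that] by (simp add: real_sqrt_le_mono)
    have sqeta: "sqrt \<eta> > 0" using eta by simp
    have dU: "(U has_real_derivative U' s) (at s)" if s: "s \<in> {0<..<\<tau>} - D" for s
    proof -
      have dY: "((\<lambda>s. V s + \<eta>) has_real_derivative V' s) (at s)"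
        using Vd[OF s] by (auto intro!: derivative_eq_intros)
      have "V s + \<eta> > 0" using Vpos[of s] s eta by auto
      from DERIV_chain2[OF DERIV_real_sqrt[OF this] dY] show ?thesis unfolding U_def U'_def .
    qed
    have dZ: "(Z has_real_derivative Z' s) (at s)" if s: "s \<in> {0<..<\<tau>} - D" for s
      unfolding Z_def Z'_def
      by (auto intro!: derivative_eq_intros dU[OF s] simp: algebra_simps)
    have Z'le: "Z' s \<le> 0" if s: "s \<in> {0<..<\<tau>} - D" for s
    proof -
      have s0: "s \<in> {0..\<tau>}" using s by auto
      define u where "u = U s"
      have u: "u \<ge> sqrt \<eta>" using Upos[OF s0] u_def by simp
      have upos: "u > 0" using u sqeta by linarith
      have Vs: "V s = u\<^sup>2 - \<eta>" using Vpos[OF s0] eta by (simp add: u_def U_def)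
      have U'eq: "U' s = V' s / (2*u)" by (simp add: U'_def u_def U_def field_simps)
      have "V' s / (2*u) \<le> (-2*c*V s + 2*k* sqrt(V s)*\<phi> s) / (2*u)"
        using Vineq[OF s] upos by (simp add: divide_right_mono)
      also have "\<dots> = -c * (V s / u) + k * (sqrt (V s) / u) * \<phi> s" using upos by (simp add: field_simps)
      also have "\<dots> \<le> -c * (u - sqrt \<eta>) + k * \<phi> s"
      proof -
        have "V s / u = u - \<eta> / u" using upos Vs by (simp add: field_simps power2_eq_square)
        moreover have "\<eta> / u \<le> sqrt \<eta>"
        proof -
          have "\<eta> = sqrt \<eta> * sqrt \<eta>" using eta by simp
          also have "\<dots> \<le> sqrt \<eta> * u" using u sqeta by (intro mult_left_mono) auto
          finally show ?thesis using upos by (simp add: divide_le_eq)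
        qed
        ultimately have a: "- c * (V s / u) \<le> -c * (u - sqrt \<eta>)" using c by (simp add: mult_left_mono)
        have "sqrt (V s) \<le> u" unfolding u_def U_def using eta by (simp add: real_sqrt_le_mono)
        then have "sqrt (V s) / u \<le> 1" using upos by simp
        moreover have "0 \<le> k * \<phi> s" using k phi[OF s0] by simp
        ultimately have b: "k * (sqrt (V s) / u) * \<phi> s \<le> k * \<phi> s"
          using k phi[OF s0] by (metis mult.commute mult.left_commute mult_left_le real_sqrt_ge_zero Vpos[OF s0] divide_nonneg_pos upos mult_nonneg_nonneg)
        from a b show ?thesis by linarith
      qed
      also have "\<dots> \<le> -c * u + c * M"
      proof -
        have "k * \<phi> s \<le> k * \<Phi>" using k phi[OF s0] by (simp add: mult_left_mono)
        also have "\<dots> = c * ((k/c) * \<Phi>)" using c by simp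
        finally show ?thesis unfolding M_def by (simp add: algebra_simps)
      qed
      finally have "U' s \<le> -c * u + c * M" using U'eq by simp
      then have "c * (u - M) + U' s \<le> 0" by (simp add: algebra_simps)
      then have "exp (c * s) * (c * (u - M) + U' s) \<le> 0" by (simp add: mult_nonneg_nonpos)
      then show ?thesis unfolding Z'_def u_def by (simp add: algebra_simps)
    qed
    have Uc: "continuous_on {0..\<tau>} U"
      unfolding U_def by (intro continuous_intros Vc)
    have Zc: "continuous_on {0..t} Z"
      unfolding Z_def by (intro continuous_intros continuous_on_subset[OF Uc]) (use tt in auto)
    have "Z t \<le> Z 0"
    proof (rule ftc_decr[OF tt(1) D Zc])
      fix s assume s: "s \<in> {0<..<t} - D"
      then have s': "s \<in> {0<..<\<tau>} - D" using tt by auto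
      show "(Z has_real_derivative Z' s) (at s)" by (rule dZ[OF s'])
      show "Z' s \<le> 0" by (rule Z'le[OF s'])
    qed
    then have Zt: "exp (c * t) * (U t - M) \<le> U 0 - M" by (simp add: Z_def)
    have "U t \<le> M + U 0"
    proof (cases "U t \<le> M")
      case True
      have "U 0 \<ge> 0" using Vpos[of 0] tau eta by (simp add: U_def)
      then show ?thesis using True by linarith
    next
      case False
      have "1 \<le> exp (c * t)" using c tt by simp
      then have "1 * (U t - M) \<le> exp (c * t) * (U t - M)" using False
        by (intro mult_right_mono) auto
      then have "U t - M \<le> exp (c * t) * (U t - M)" by simp
      have "0 \<le> \<Phi>" using phi[OF t] by linarith
      then have "0 \<le> M" unfolding M_def using k c eta by simp
      then show ?thesis using Zt \<open>U t - M \<le> exp (c * t) * (U t - M)\<close> by linarith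
    qed
    moreover have "sqrt (V t) \<le> U t" unfolding U_def using eta by (simp add: real_sqrt_le_mono)
    moreover have "U 0 \<le> sqrt (V 0) + sqrt \<eta>"
      unfolding U_def using Vpos[of 0] tau eta by (intro sqrt_add_le_add_sqrt) auto
    ultimately show ?thesis unfolding M_def by linarith
  qed
  show ?thesis
  proof (rule field_le_epsilon)
    fix e :: real assume e: "e > 0"
    have "sqrt ((e/2)\<^sup>2) = e/2" using e by simp
    then show "sqrt (V t) \<le> sqrt (V 0) + k / c * \<Phi> + e" using main[of "(e/2)\<^sup>2"] e by simp
  qed
qed

lemma small_param:
  fixes A B :: real
  assumes B: "B \<ge> 0" and H: "\<And>z. z > 0 \<Longrightarrow> A \<le> B * z"
  shows "A \<le> 0"
proof (rule ccontr)
  assume "\<not> A \<le> 0"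
  then have A: "A > 0" by simp
  show False
  proof (cases "B = 0")
    case True then show False using H[of 1] A by simp
  next
    case False
    then have Bp: "B > 0" using B by simp
    have "A \<le> B * (A / (2*B))" using H[of "A/(2*B)"] A Bp by simp
    also have "\<dots> = A / 2" using Bp by simp
    finally show False using A by simp
  qed
qed

lemma powr_inv_p:
  fixes x p :: real
  assumes "x \<ge> 0" "p > 0"
  shows "(x powr (1/p)) powr p = x"
  using assms by (simp add: powr_powr)

lemma alg_bound:
  fixes c p k I J C0 :: real
  assumes c: "c > 0" and p: "p \<ge> 1" and k: "k \<ge> 0" and I: "I \<ge> 0" and J: "J \<ge> 0" and C0: "C0 \<ge> 0"
    and H: "\<And>z. z > 0 \<Longrightarrow> c*p*I \<le> C0 + k*(p-1)*z*I + k * z powr (1-p) * J"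
  shows "I powr (1/p) \<le> (k/c) * J powr (1/p) + (C0/(c*p)) powr (1/p)"
proof -
  define X where "X = I powr (1/p)"
  define F where "F = J powr (1/p)"
  define B where "B = (C0/(c*p)) powr (1/p)"
  have p0: "p > 0" using p by simp
  have XI: "X powr p = I" unfolding X_def using powr_inv_p[OF I p0] .
  have FJ: "F powr p = J" unfolding F_def using powr_inv_p[OF J p0] .
  have BC: "B powr p = C0/(c*p)" unfolding B_def using powr_inv_p[of "C0/(c*p)" p] C0 c p0 by simp
  have X0: "X \<ge> 0" "F \<ge> 0" "B \<ge> 0" by (simp_all add: X_def F_def B_def)
  show ?thesis
  proof (cases "X = 0")
    case True
    then show ?thesis using X0 k c unfolding X_def[symmetric] F_def[symmetric] B_def[symmetric] by simp
  next
    case Xn: False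
    then have Xp: "X > 0" using X0 by simp
    show ?thesis
    proof (cases "J = 0")
      case True
      have "c*p*I - C0 \<le> 0"
      proof (rule small_param[of "k*(p-1)*I"])
        show "0 \<le> k*(p-1)*I" using k p I by simp
        fix z :: real assume "z > 0"
        then show "c*p*I - C0 \<le> k*(p-1)*I * z" using H[of z] True by (simp add: algebra_simps)
      qed
      then have "I \<le> C0/(c*p)" using c p0 by (simp add: field_simps)
      then have "I powr (1/p) \<le> (C0/(c*p)) powr (1/p)" using I p0 by (intro powr_mono2) auto
      then show ?thesis using True by simp
    next
      case Jn: False
      then have Jp: "J > 0" using J by simp
      have Fp: "F > 0" using Jp by (simp add: F_def)
      define Xq where "Xq = X powr (p-1)"
      have Xq: "Xq > 0" using Xp by (simp add: Xq_def)
      have Xp_eq: "X powr p = X * Xq"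
      proof -
        have "X powr p = X powr (1 + (p-1))" by simp
        also have "\<dots> = X powr 1 * X powr (p-1)" by (rule powr_add)
        finally show ?thesis using X0 by (simp add: Xq_def)
      qed
      have Fp_eq: "F powr (1-p) * F powr p = F"
      proof -
        have "F powr (1-p) * F powr p = F powr ((1-p) + p)" by (rule powr_add[symmetric])
        also have "\<dots> = F" using X0(2) by simp
        finally show ?thesis .
      qed
      have Xm: "X powr (1-p) = inverse Xq"
      proof -
        have "X powr (1-p) = X powr (-(p-1))" by simp
        also have "\<dots> = inverse (X powr (p-1))" by (rule powr_minus)
        finally show ?thesis by (simp only: Xq_def)
      qed
      define z where "z = F / X"
      have zp: "z > 0" using Fp Xp by (simp add: z_def)
      have t1: "k*(p-1)*z*I = k*(p-1)*F*Xq"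
        using Xp by (simp add: z_def XI[symmetric] Xp_eq field_simps)
      have t2: "k * z powr (1-p) * J = k*F*Xq"
      proof -
        have "z powr (1-p) = F powr (1-p) / X powr (1-p)" by (simp add: z_def powr_divide)
        then have "k * z powr (1-p) * J = k * (F powr (1-p) * F powr p) * Xq"
          using Xq by (simp add: FJ[symmetric] Xm field_simps)
        then show ?thesis using Fp_eq by simp
      qed
      have "c*p*I \<le> C0 + k*(p-1)*z*I + k * z powr (1-p) * J" by (rule H[OF zp])
      then have "c*p*I \<le> C0 + k*(p-1)*F*Xq + k*F*Xq" by (simp only: t1 t2)
      moreover have "I = X*Xq" using XI Xp_eq by simp
      ultimately have "c*p*(X*Xq) \<le> C0 + k*(p-1)*F*Xq + k*F*Xq" by simp
      then have main: "c*p*(X*Xq) \<le> C0 + k*p*F*Xq" by (simp add: algebra_simps)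
      show ?thesis
      proof (rule ccontr)
        assume "\<not> ?thesis"
        then have gt: "X > (k/c)*F + B" unfolding X_def[symmetric] F_def[symmetric] B_def[symmetric] by simp
        then have "c * X > k*F + c*B" using c by (simp add: field_simps)
        then have a: "c*X*Xq > (k*F + c*B)*Xq" using Xq by (simp add: mult_strict_right_mono)
        have BX: "B \<le> X" using gt k c X0 by (smt (verit) divide_nonneg_pos mult_nonneg_nonneg)
        have "B * B powr (p-1) = B powr p"
        proof (cases "B = 0")
          case True then show ?thesis using p0 by simp
        next
          case False
          then have "B * B powr (p-1) = B powr 1 * B powr (p-1)" using X0 by simp
          also have "\<dots> = B powr (1 + (p-1))" by (rule powr_add[symmetric])
          finally show ?thesis by simp
        qed
        moreover have "B powr (p-1) \<le> Xq" unfolding Xq_def using BX X0 p by (intro powr_mono2) auto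
        ultimately have "B powr p \<le> B * Xq" using X0 by (metis mult_left_mono)
        then have "C0/(c*p) \<le> B * Xq" using BC by simp
        then have "C0/p \<le> c * B * Xq" using c p0 by (simp add: field_simps)
        with a have "c*X*Xq > k*F*Xq + C0/p" by (simp add: algebra_simps)
        then have "p*(c*X*Xq) > p*(k*F*Xq + C0/p)" using p0 by simp
        then have "c*p*(X*Xq) > C0 + k*p*F*Xq" using p0 by (simp add: algebra_simps)
        with main show False by simp
      qed
    qed
  qed
qed

lemma young_pt:
  fixes y ph z p :: real
  assumes y: "y > 0" and ph: "ph \<ge> 0" and z: "z > 0" and p: "p \<ge> 1"
  shows "y powr ((p-1)/2) * ph \<le> ((p-1)/p) * z * y powr (p/2) + (1/p) * z powr (1-p) * ph powr p"
proof (cases "p = 1 \<or> ph = 0")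
  case True
  then show ?thesis
  proof
    assume "p = 1" then show ?thesis using ph z y by simp
  next
    assume "ph = 0" then show ?thesis using p z y by simp
  qed
next
  case False
  then have p1: "p > 1" and php: "ph > 0" using p ph by auto
  define A where "A = z * y powr (p/2)"
  define Bq where "Bq = z powr (1-p) * ph powr p"
  have Ap: "A > 0" using z y by (simp add: A_def)
  have Bp: "Bq > 0" using z php by (simp add: Bq_def)
  have Y: "A powr ((p-1)/p) * Bq powr (1/p) \<le> ((p-1)/p) * A + (1/p) * Bq"
    using Youngs_inequality_0[of "(p-1)/p" "1/p" A Bq] Ap Bp p1 by (simp add: field_simps)
  have ee: "p/2 * ((p-1)/p) = (p-1)/2" using p1 by (simp add: field_simps)
  have "A powr ((p-1)/p) = z powr ((p-1)/p) * y powr ((p-1)/2)"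
    by (simp only: A_def powr_mult powr_powr ee)
  moreover have "Bq powr (1/p) = z powr ((1-p)/p) * ph"
    using php p1 by (simp add: Bq_def powr_mult powr_powr)
  moreover have "z powr ((p-1)/p) * z powr ((1-p)/p) = 1"
  proof -
    have "z powr ((p-1)/p) * z powr ((1-p)/p) = z powr ((p-1)/p + (1-p)/p)" by (rule powr_add[symmetric])
    also have "(p-1)/p + (1-p)/p = 0" using p1 by (simp add: field_simps)
    finally show ?thesis using z by simp
  qed
  ultimately have "A powr ((p-1)/p) * Bq powr (1/p) = y powr ((p-1)/2) * ph"
    by (simp add: algebra_simps)
  then show ?thesis using Y by (simp add: A_def Bq_def algebra_simps)
qed

lemma eta_bound:
  fixes eta Y p Vm :: real
  assumes eta: "eta > 0" and Y: "eta \<le> Y" "Y \<le> Vm" and p: "p \<ge> 1"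
  shows "eta * Y powr (p/2 - 1) \<le> eta powr (p/2) + eta * Vm powr (p/2 - 1)"
proof (cases "p \<le> 2")
  case True
  have "Y powr (p/2 - 1) \<le> eta powr (p/2 - 1)" using True eta Y by (intro powr_mono2') auto
  then have "eta * Y powr (p/2 - 1) \<le> eta * eta powr (p/2 - 1)" using eta by simp
  also have "eta * eta powr (p/2 - 1) = eta powr (p/2)"
  proof -
    have "eta * eta powr (p/2 - 1) = eta powr 1 * eta powr (p/2 - 1)" using eta by simp
    also have "\<dots> = eta powr (1 + (p/2 - 1))" by (rule powr_add[symmetric])
    finally show ?thesis by simp
  qed
  finally show ?thesis using eta Y by (simp add: add_increasing2)
next
  case False
  have "Y powr (p/2 - 1) \<le> Vm powr (p/2 - 1)" using False eta Y by (intro powr_mono2) auto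
  then have "eta * Y powr (p/2 - 1) \<le> eta * Vm powr (p/2 - 1)" using eta by simp
  then show ?thesis by (simp add: add_increasing)
qed

lemma lim_R:
  fixes V0 p c tau B1 :: real
  assumes V0: "V0 \<ge> 0" and p: "p \<ge> 1" and c: "c > 0" and B1: "B1 \<ge> 0" and tau: "tau \<ge> 0"
  shows "((\<lambda>eta. (((V0 + eta) powr (p/2) + c*p*(eta powr (p/2) + eta*B1)*tau)/(c*p)) powr (1/p))
          \<longlongrightarrow> ((V0 powr (p/2))/(c*p)) powr (1/p)) (at_right 0)"
proof -
  have cp: "c * p > 0" using c p by simp
  have ev: "eventually (\<lambda>x. 0 < x) (at_right (0::real))" by (rule eventually_at_right_less)
  have l0: "((\<lambda>eta. V0 + eta) \<longlongrightarrow> V0 + 0) (at_right (0::real))"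
    by (intro tendsto_intros)
  have l0': "((\<lambda>eta. eta) \<longlongrightarrow> 0) (at_right (0::real))"
    by (intro tendsto_intros)
  have l1: "((\<lambda>eta. (V0 + eta) powr (p/2)) \<longlongrightarrow> (V0 + 0) powr (p/2)) (at_right 0)"
    by (rule tendsto_powr'[OF l0 tendsto_const]) (use p V0 ev in \<open>auto elim: eventually_mono\<close>)
  have l2: "((\<lambda>eta::real. eta powr (p/2)) \<longlongrightarrow> 0 powr (p/2)) (at_right 0)"
    by (rule tendsto_powr'[OF l0' tendsto_const]) (use p ev in \<open>auto elim: eventually_mono\<close>)
  have l3: "((\<lambda>eta. ((V0 + eta) powr (p/2) + c*p*(eta powr (p/2) + eta*B1)*tau)/(c*p))
          \<longlongrightarrow> ((V0 + 0) powr (p/2) + c*p*(0 powr (p/2) + 0*B1)*tau)/(c*p)) (at_right 0)"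
    by (intro tendsto_intros l1 l2) (use cp in auto)
  have l3': "((\<lambda>eta. ((V0 + eta) powr (p/2) + c*p*(eta powr (p/2) + eta*B1)*tau)/(c*p))
          \<longlongrightarrow> (V0 powr (p/2))/(c*p)) (at_right 0)"
    using l3 by simp
  have ev2: "eventually (\<lambda>eta. 0 \<le> ((V0 + eta) powr (p/2) + c*p*(eta powr (p/2) + eta*B1)*tau)/(c*p)) (at_right 0)"
    using ev
  proof (rule eventually_mono)
    fix eta :: real assume "0 < eta"
    then show "0 \<le> ((V0 + eta) powr (p/2) + c*p*(eta powr (p/2) + eta*B1)*tau)/(c*p)"
      using c p B1 tau by (intro divide_nonneg_pos add_nonneg_nonneg mult_nonneg_nonneg) auto
  qed
  show ?thesis
    by (rule tendsto_powr'[OF l3' tendsto_const]) (use p ev2 in auto)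
qed

lemma scalar_Lp_eta:
  fixes V V' \<phi> :: "real \<Rightarrow> real"
  assumes tau: "0 \<le> \<tau>" and D: "finite D" and Vc: "continuous_on {0..\<tau>} V"
    and Vpos: "\<And>t. t \<in> {0..\<tau>} \<Longrightarrow> 0 \<le> V t"
    and Vm: "\<And>t. t \<in> {0..\<tau>} \<Longrightarrow> V t \<le> Vmax"
    and Vd: "\<And>t. t \<in> {0<..<\<tau>} - D \<Longrightarrow> (V has_real_derivative V' t) (at t)"
    and Vineq: "\<And>t. t \<in> {0<..<\<tau>} - D \<Longrightarrow> V' t \<le> -2*c*V t + 2*k * sqrt(V t)*\<phi> t"
    and c: "c > 0" and k: "k \<ge> 0" and phi: "\<And>t. t \<in> {0..\<tau>} \<Longrightarrow> 0 \<le> \<phi> t"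
    and phint: "(\<lambda>t. \<phi> t powr p) integrable_on {0..\<tau>}"
    and p: "p \<ge> 1"
    and eta: "0 < eta" "eta \<le> 1"
  shows "(integral {0..\<tau>} (\<lambda>t. V t powr (p/2))) powr (1/p) \<le> (k/c) * (integral {0..\<tau>} (\<lambda>t. \<phi> t powr p)) powr (1/p)
     + (((V 0 + eta) powr (p/2) + c*p*(eta powr (p/2) + eta*((Vmax+1) powr (p/2 - 1)))*\<tau>)/(c*p)) powr (1/p)"
proof -
  define B1 where "B1 = (Vmax+1) powr (p/2 - 1)"
  define E where "E = eta powr (p/2) + eta*B1"
  define Y where "Y = (\<lambda>s. V s + eta)"
  define h where "h = (\<lambda>s. Y s powr (p/2))"
  define h' where "h' = (\<lambda>s. p/2 * Y s powr (p/2 - 1) * V' s)"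
  define IY where "IY = integral {0..\<tau>} h"
  define Iphi where "Iphi = integral {0..\<tau>} (\<lambda>t. \<phi> t powr p)"
  define IV where "IV = integral {0..\<tau>} (\<lambda>t. V t powr (p/2))"
  have p0: "p > 0" using p by simp
  have Ypos: "Y s \<ge> eta" "Y s > 0" if "s \<in> {0..\<tau>}" for s using Vpos[OF that] eta by (auto simp: Y_def)
  have Yc: "continuous_on {0..\<tau>} Y" unfolding Y_def by (intro continuous_intros Vc)
  have hc: "continuous_on {0..\<tau>} h"
    unfolding h_def by (rule continuous_on_powr'[OF Yc continuous_on_const]) (use Ypos in force)
  have hint: "h integrable_on {0..\<tau>}" by (rule integrable_continuous_interval[OF hc])
  have Vpc: "continuous_on {0..\<tau>} (\<lambda>t. V t powr (p/2))"
    by (rule continuous_on_powr'[OF Vc continuous_on_const]) (use Vpos p in force)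
  have Vpint: "(\<lambda>t. V t powr (p/2)) integrable_on {0..\<tau>}" by (rule integrable_continuous_interval[OF Vpc])
  have dh: "(h has_real_derivative h' s) (at s)" if s: "s \<in> {0<..<\<tau>} - D" for s
  proof -
    have s0: "s \<in> {0..\<tau>}" using s by auto
    have dY: "(Y has_real_derivative V' s) (at s)"
      unfolding Y_def using Vd[OF s] by (auto intro!: derivative_eq_intros)
    show ?thesis unfolding h_def h'_def
      by (rule DERIV_chain2[OF has_real_derivative_powr[OF Ypos(2)[OF s0], of "p/2"] dY])
  qed
  have IYnn: "IY \<ge> 0" unfolding IY_def h_def by (rule integral_nonneg[OF hint[unfolded h_def]]) auto
  have Iphinn: "Iphi \<ge> 0" unfolding Iphi_def by (rule integral_nonneg[OF phint]) auto
  have B1nn: "B1 \<ge> 0" by (simp add: B1_def)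
  have Enn: "E \<ge> 0" using eta B1nn by (simp add: E_def)
  have h0: "h 0 \<ge> 0" by (simp add: h_def)
  have key: "c*p*IY \<le> h 0 + c*p*E*\<tau> + k*(p-1)*z*IY + k * z powr (1-p) * Iphi" if z: "z > 0" for z
  proof -
    define kk where "kk = (\<lambda>s. (k*(p-1)*z - c*p) * h s + c*p*E + (k * z powr (1-p)) * \<phi> s powr p)"
    have kkint: "(kk has_integral ((k*(p-1)*z - c*p) * IY + c*p*E*\<tau> + (k * z powr (1-p)) * Iphi)) {0..\<tau>}"
    proof -
      have a: "((\<lambda>s. (k*(p-1)*z - c*p) * h s) has_integral ((k*(p-1)*z - c*p) * IY)) {0..\<tau>}"
        unfolding IY_def by (intro has_integral_mult_right integrable_integral hint)
      have b: "((\<lambda>s. c*p*E) has_integral (c*p*E*\<tau>)) {0..\<tau>}"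
        using has_integral_const_real[of "c*p*E" 0 \<tau>] tau by (simp add: mult.commute)
      have d: "((\<lambda>s. (k * z powr (1-p)) * \<phi> s powr p) has_integral ((k * z powr (1-p)) * Iphi)) {0..\<tau>}"
        unfolding Iphi_def by (intro has_integral_mult_right integrable_integral phint)
      show ?thesis unfolding kk_def by (intro has_integral_add a b d)
    qed
    have "h \<tau> - h 0 \<le> integral {0..\<tau>} kk"
    proof (rule ftc_le[OF tau D hc dh])
      show "kk integrable_on {0..\<tau>}" using kkint by blast
    next
      fix s assume s: "s \<in> {0<..<\<tau>} - D"
      then have s0: "s \<in> {0..\<tau>}" by auto
      define y where "y = Y s"
      have y: "y \<ge> eta" "y > 0" "y \<le> Vmax + 1" using Ypos[OF s0] Vm[OF s0] eta by (auto simp: y_def Y_def)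
      have Vs: "V s = y - eta" by (simp add: y_def Y_def)
      have ph: "\<phi> s \<ge> 0" using phi[OF s0] .
      have yq: "y powr (p/2 - 1) \<ge> 0" by simp
      have step1: "h' s \<le> p/2 * y powr (p/2 - 1) * (-2*c*V s + 2*k * sqrt(V s)*\<phi> s)"
        unfolding h'_def y_def[symmetric] using Vineq[OF s] yq p0 by (intro mult_left_mono) auto
      have yy: "y powr (p/2 - 1) * y = y powr (p/2)"
      proof -
        have "y powr (p/2 - 1) * y = y powr (p/2 - 1) * y powr 1" using y by simp
        also have "\<dots> = y powr ((p/2 - 1) + 1)" by (rule powr_add[symmetric])
        finally show ?thesis by simp
      qed
      have ysq: "y powr (p/2 - 1) * sqrt (V s) \<le> y powr ((p-1)/2)"
      proof -
        have "sqrt (V s) \<le> sqrt y" using Vs eta by (simp add: real_sqrt_le_mono)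
        then have "y powr (p/2 - 1) * sqrt (V s) \<le> y powr (p/2 - 1) * y powr (1/2)"
          using yq y by (simp add: powr_half_sqrt mult_left_mono)
        also have "\<dots> = y powr ((p/2 - 1) + 1/2)" by (rule powr_add[symmetric])
        also have "(p/2 - 1) + 1/2 = (p-1)/2" by simp
        finally show ?thesis .
      qed
      have eb: "eta * y powr (p/2 - 1) \<le> E"
        unfolding E_def B1_def by (rule eta_bound[OF eta(1) y(1) y(3) p])
      have yg: "y powr ((p-1)/2) * \<phi> s \<le> ((p-1)/p) * z * y powr (p/2) + (1/p) * z powr (1-p) * \<phi> s powr p"
        by (rule young_pt[OF y(2) ph z p])
      have "p/2 * y powr (p/2 - 1) * (-2*c*V s + 2*k * sqrt(V s)*\<phi> s)
          = -c*p*(y powr (p/2 - 1) * y) + c*p*(eta * y powr (p/2 - 1)) + k*p*((y powr (p/2 - 1) * sqrt (V s)) * \<phi> s)"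
        unfolding Vs by (simp add: algebra_simps)
      also have "\<dots> \<le> -c*p*(y powr (p/2)) + c*p*E + k*p*(y powr ((p-1)/2) * \<phi> s)"
      proof -
        have "c*p*(eta * y powr (p/2 - 1)) \<le> c*p*E" using eb c p0 by simp
        moreover have "k*p*((y powr (p/2 - 1) * sqrt (V s)) * \<phi> s) \<le> k*p*(y powr ((p-1)/2) * \<phi> s)"
          using ysq ph k p0 by (intro mult_left_mono mult_right_mono) auto
        ultimately show ?thesis unfolding yy by linarith
      qed
      also have "\<dots> \<le> -c*p*(y powr (p/2)) + c*p*E + k*p*(((p-1)/p) * z * y powr (p/2) + (1/p) * z powr (1-p) * \<phi> s powr p)"
        using yg k p0 by (simp add: mult_left_mono)
      also have "\<dots> = kk s" unfolding kk_def h_def y_def[symmetric] using p0 by (simp add: field_simps)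
      finally show "h' s \<le> kk s" using step1 by linarith
    qed
    also have "integral {0..\<tau>} kk = (k*(p-1)*z - c*p) * IY + c*p*E*\<tau> + (k * z powr (1-p)) * Iphi"
      using kkint by (rule integral_unique)
    finally have "h \<tau> - h 0 \<le> (k*(p-1)*z - c*p) * IY + c*p*E*\<tau> + (k * z powr (1-p)) * Iphi" .
    moreover have "h \<tau> \<ge> 0" by (simp add: h_def)
    ultimately show ?thesis by (simp add: algebra_simps)
  qed
  have C0: "h 0 + c*p*E*\<tau> \<ge> 0" using h0 c p0 Enn tau by simp
  have A: "IY powr (1/p) \<le> (k/c) * Iphi powr (1/p) + ((h 0 + c*p*E*\<tau>)/(c*p)) powr (1/p)"
    by (rule alg_bound[OF c p k IYnn Iphinn C0]) (use key in \<open>simp add: algebra_simps\<close>)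
  have "IV \<le> IY" unfolding IV_def IY_def
  proof (rule integral_le[OF Vpint hint])
    fix t assume t: "t \<in> {0..\<tau>}"
    show "V t powr (p/2) \<le> h t" unfolding h_def Y_def using Vpos[OF t] eta p0 by (intro powr_mono2) auto
  qed
  then have "IV powr (1/p) \<le> IY powr (1/p)"
    using p0 integral_nonneg[OF Vpint] by (intro powr_mono2) (auto simp: IV_def)
  with A show ?thesis unfolding IV_def[symmetric] Iphi_def[symmetric] E_def B1_def h_def Y_def by simp
qed

lemma scalar_Lp:
  fixes V V' \<phi> :: "real \<Rightarrow> real"
  assumes tau: "0 \<le> \<tau>" and D: "finite D" and Vc: "continuous_on {0..\<tau>} V"
    and Vpos: "\<And>t. t \<in> {0..\<tau>} \<Longrightarrow> 0 \<le> V t"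
    and Vm: "\<And>t. t \<in> {0..\<tau>} \<Longrightarrow> V t \<le> Vmax"
    and Vd: "\<And>t. t \<in> {0<..<\<tau>} - D \<Longrightarrow> (V has_real_derivative V' t) (at t)"
    and Vineq: "\<And>t. t \<in> {0<..<\<tau>} - D \<Longrightarrow> V' t \<le> -2*c*V t + 2*k * sqrt(V t)*\<phi> t"
    and c: "c > 0" and k: "k \<ge> 0" and phi: "\<And>t. t \<in> {0..\<tau>} \<Longrightarrow> 0 \<le> \<phi> t"
    and phint: "(\<lambda>t. \<phi> t powr p) integrable_on {0..\<tau>}"
    and p: "p \<ge> 1"
  shows "(integral {0..\<tau>} (\<lambda>t. V t powr (p/2))) powr (1/p) \<le> (k/c) * (integral {0..\<tau>} (\<lambda>t. \<phi> t powr p)) powr (1/p)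
     + (1/(c*p)) powr (1/p) * sqrt (V 0)"
proof -
  define B1 where "B1 = (Vmax+1) powr (p/2 - 1)"
  have V0: "V 0 \<ge> 0" using Vpos tau by simp
  have B1: "B1 \<ge> 0" by (simp add: B1_def)
  have p0: "p > 0" using p by simp
  let ?L = "(integral {0..\<tau>} (\<lambda>t. V t powr (p/2))) powr (1/p)"
  let ?K = "(k/c) * (integral {0..\<tau>} (\<lambda>t. \<phi> t powr p)) powr (1/p)"
  have lim: "((\<lambda>eta. ?K + (((V 0 + eta) powr (p/2) + c*p*(eta powr (p/2) + eta*B1)*\<tau>)/(c*p)) powr (1/p))
      \<longlongrightarrow> ?K + ((V 0 powr (p/2))/(c*p)) powr (1/p)) (at_right 0)"
    by (intro tendsto_add tendsto_const lim_R V0 p c B1 tau)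
  have ev: "eventually (\<lambda>eta. ?L \<le> ?K + (((V 0 + eta) powr (p/2) + c*p*(eta powr (p/2) + eta*B1)*\<tau>)/(c*p)) powr (1/p)) (at_right 0)"
    unfolding eventually_at_right_field
  proof (intro exI[of _ 1] conjI allI impI)
    fix eta :: real assume "0 < eta" "eta < 1"
    then show "?L \<le> ?K + (((V 0 + eta) powr (p/2) + c*p*(eta powr (p/2) + eta*B1)*\<tau>)/(c*p)) powr (1/p)"
      unfolding B1_def by (intro scalar_Lp_eta[OF tau D Vc Vpos Vm Vd Vineq c k phi phint p]) auto
  qed simp
  have "?L \<le> ?K + ((V 0 powr (p/2))/(c*p)) powr (1/p)"
    by (rule tendsto_le[OF _ lim tendsto_const ev]) simp
  also have "((V 0 powr (p/2))/(c*p)) powr (1/p) = (1/(c*p)) powr (1/p) * sqrt (V 0)"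
  proof -
    have "((V 0 powr (p/2))/(c*p)) powr (1/p) = (V 0 powr (p/2)) powr (1/p) / (c*p) powr (1/p)"
      by (rule powr_divide)
    also have "(V 0 powr (p/2)) powr (1/p) = V 0 powr (1/2)" using p0 by (simp add: powr_powr)
    also have "\<dots> = sqrt (V 0)" using V0 by (simp add: powr_half_sqrt)
    also have "(1/(c*p)) powr (1/p) = 1 / (c*p) powr (1/p)" by (simp add: powr_divide)
    ultimately show ?thesis by simp
  qed
  finally show ?thesis .
qed

lemma Ups_cont: "continuous_on S (Upsilon R)"
  unfolding Upsilon_def by (intro continuous_on_vec_lambda cont_quad)

lemma ode_deriv:
  fixes g a :: "real \<Rightarrow> real^'n"
  assumes hi: "\<forall>t\<in>{0..\<tau>}. (g has_integral (a t - a0)) {0..t}"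
    and D: "finite D" and t: "t \<in> {0<..<\<tau>} - D"
    and gc: "continuous (at t within {0..\<tau>}) g"
  shows "(a has_vector_derivative g t) (at t)"
proof -
  have tau: "0 \<le> \<tau>" using t by auto
  have gi: "g integrable_on {0..\<tau>}" using hi tau by auto
  have d1: "((\<lambda>u. integral {0..u} g) has_vector_derivative g t) (at t within ({0..\<tau>} - D))"
    by (rule integral_has_vector_derivative_continuous_at[OF gi _ D])
       (use t continuous_within_subset[OF gc, of "{0..\<tau>} - D"] in auto)
  have op: "open ({0<..<\<tau>} - D)" using D by (intro open_Diff finite_imp_closed) auto
  have eq: "at t within ({0..\<tau>} - D) = at t"
    by (rule at_within_open_subset[OF t op]) auto
  have d2: "((\<lambda>u. integral {0..u} g + a0) has_vector_derivative g t) (at t)"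
    using d1 unfolding eq has_vector_derivative_add_const .
  show ?thesis
  proof (rule has_vector_derivative_transform_within_open[OF d2 open_greaterThanLessThan])
    show "t \<in> {0<..<\<tau>}" using t by auto
    fix y :: real assume "y \<in> {0<..<\<tau>}"
    then have "(g has_integral (a y - a0)) {0..y}" using hi by auto
    then show "integral {0..y} g + a0 = a y" by (simp add: integral_unique)
  qed
qed

lemma V_deriv:
  fixes P :: "real^'n^'n" and a :: "real \<Rightarrow> real^'n"
  assumes sym: "symmetric_mat P" and da: "(a has_vector_derivative v) (at t)"
  shows "((\<lambda>s. a s \<bullet> (P *v a s)) has_real_derivative (2 * (a t \<bullet> (P *v v)))) (at t)"
proof -
  have da': "(a has_derivative (\<lambda>h. h *\<^sub>R v)) (at t)" using da by (simp add: has_vector_derivative_def)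
  have dPa: "((\<lambda>s. P *v a s) has_derivative (\<lambda>h. P *v (h *\<^sub>R v))) (at t)"
    by (rule bounded_linear.has_derivative[OF matrix_vector_mul_bounded_linear da'])
  have di: "((\<lambda>s. a s \<bullet> (P *v a s)) has_derivative (\<lambda>h. a t \<bullet> (P *v (h *\<^sub>R v)) + (h *\<^sub>R v) \<bullet> (P *v a t))) (at t)"
    by (rule has_derivative_inner[OF da' dPa])
  have "(\<lambda>h. a t \<bullet> (P *v (h *\<^sub>R v)) + (h *\<^sub>R v) \<bullet> (P *v a t)) = (\<lambda>h. h * (2 * (a t \<bullet> (P *v v))))"
  proof
    fix h :: real
    have "v \<bullet> (P *v a t) = a t \<bullet> (P *v v)" by (rule sym_inner[OF sym])
    then show "a t \<bullet> (P *v (h *\<^sub>R v)) + (h *\<^sub>R v) \<bullet> (P *v a t) = h * (2 * (a t \<bullet> (P *v v)))"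
      by (simp add: matrix_vector_mult_scaleR algebra_simps)
  qed
  then show ?thesis using di unfolding has_field_derivative_def by (simp add: mult_commute_abs)
qed

lemma Lp_trunc:
  fixes g :: "real \<Rightarrow> real^'n"
  assumes p: "p > 0" and gi: "(\<lambda>t. norm (g t) powr p) integrable_on {0..\<tau>}"
  shows "Lp_norm p (trunc \<tau> g) = (integral {0..\<tau>} (\<lambda>t. norm (g t) powr p)) powr (1/p)"
proof -
  have eq: "(\<lambda>t. norm (trunc \<tau> g t) powr p) = (\<lambda>t. if t \<in> {0..\<tau>} then norm (g t) powr p else 0)"
    by (auto simp: trunc_def)
  have "((\<lambda>t. if t \<in> {0..\<tau>} then norm (g t) powr p else 0) has_integral integral {0..\<tau>} (\<lambda>t. norm (g t) powr p)) {0..}"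
    by (subst has_integral_restrict) (use gi in auto)
  then show ?thesis unfolding Lp_norm_def eq by (simp add: integral_unique)
qed

lemma powr_int_bounded:
  fixes f :: "real \<Rightarrow> real^'n"
  assumes fi: "f integrable_on {0..\<tau>}" and b: "\<And>t. t \<in> {0..\<tau>} \<Longrightarrow> norm (f t) \<le> r" and p: "p > 0"
  shows "(\<lambda>t. norm (f t) powr p) integrable_on {0..\<tau>}"
proof -
  have fm: "f \<in> borel_measurable (lebesgue_on {0..\<tau>})" by (rule integrable_imp_measurable[OF fi])
  have m: "(\<lambda>t. norm (f t) powr p) \<in> borel_measurable (lebesgue_on {0..\<tau>})" using fm by measurable
  have c: "(\<lambda>_. r powr p) integrable_on {0..\<tau>}" by (rule integrable_const_ivl)
  have bb: "\<bar>norm (f t) powr p\<bar> \<le> r powr p" if "t \<in> {0..\<tau>}" for t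
    using b[OF that] p by (simp add: powr_mono2)
  show ?thesis by (rule measurable_bounded_by_integrable_imp_integrable_real[OF m c bb]) simp_all
qed

theorem theorem2:
  fixes L P :: "real^'n^'n" and R :: "'n \<Rightarrow> real^'n^'n" and nv :: "real^'n"
    and \<delta> \<epsilon> \<mu>0 :: real and s \<mu> \<kappa> :: "'n \<Rightarrow> real"
    and a0 :: "real^'n" and f a :: "real \<Rightarrow> real^'n" and \<tau> :: real
  assumes hurw: "hurwitz L"
    and Rsym: "\<And>m. symmetric_mat (R m)"
    and energy: "\<And>x. x \<bullet> Upsilon R x = 0"
    and nvec: "\<And>x. nv \<bullet> Upsilon R x = 0"
    and delta_pos: "\<delta> > 0"
    and Psym: "symmetric_mat P"
    and eps_pos: "\<epsilon> > 0"
    and s_nonneg: "\<And>m. s m \<ge> 0"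
    and P_lmi: "psd (P - \<epsilon> *\<^sub>R mat 1)"
    and G_lmi: "nsd (block
        (transpose L ** P + P ** L + \<epsilon> *\<^sub>R mat 1 + (\<Sum>m\<in>UNIV. (s m * \<delta>\<^sup>2) *\<^sub>R (R m ** R m)))
        (P + \<mu>0 *\<^sub>R mat 1 + (\<Sum>i\<in>UNIV. \<mu> i *\<^sub>R outer (axis i 1) nv))
        (P + \<mu>0 *\<^sub>R transpose (mat 1) + (\<Sum>i\<in>UNIV. \<mu> i *\<^sub>R transpose (outer (axis i 1) nv)))
        (- (\<Sum>m\<in>UNIV. s m *\<^sub>R outer (axis m 1) (axis m 1))
           + (\<Sum>j\<in>UNIV. \<kappa> j *\<^sub>R (outer (axis j 1) nv + outer nv (axis j 1)))))"
    and a0_small: "norm a0 \<le> \<delta> * sqrt (lambda_min P / lambda_max P)"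
    and tau_nonneg: "\<tau> \<ge> 0"
    and f_pc: "piecewise_continuous f"
    and f_small: "\<forall>t\<in>{0..\<tau>}. norm (f t)
        \<le> lambda_min P * \<epsilon> * \<delta> / (lambda_max P * spec_norm (2 *\<^sub>R P))"
    and sol: "is_solution L R f a0 \<tau> a"
  shows "(\<forall>t\<in>{0..\<tau>}. norm (a t) \<le> \<delta>)
    \<and> (\<forall>p::real. p \<ge> 1 \<longrightarrow>
         Lp_norm p (trunc \<tau> a)
           \<le> (lambda_max P * spec_norm (2 *\<^sub>R P) / (lambda_min P * \<epsilon>)) * Lp_norm p (trunc \<tau> f)
             + norm a0 * sqrt (lambda_max P / lambda_min P) * (2 * lambda_max P / (\<epsilon> * p)) powr (1 / p))
    \<and> Linf_norm (trunc \<tau> a)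
           \<le> (lambda_max P * spec_norm (2 *\<^sub>R P) / (lambda_min P * \<epsilon>)) * Linf_norm (trunc \<tau> f)
             + norm a0 * sqrt (lambda_max P / lambda_min P) * 1"
proof -
  define lmin where "lmin = lambda_min P"
  define lmax where "lmax = lambda_max P"
  define S2 where "S2 = spec_norm (2 *\<^sub>R P)"
  define r where "r = lmin * \<epsilon> * \<delta> / (lmax * S2)"
  have lo: "lmin * (x \<bullet> x) \<le> x \<bullet> (P *v x)" for x using eig_bounds(1)[OF Psym] unfolding lmin_def .
  have hi: "x \<bullet> (P *v x) \<le> lmax * (x \<bullet> x)" for x using eig_bounds(2)[OF Psym] unfolding lmax_def .
  obtain u where u: "norm u = 1" "u \<bullet> (P *v u) = lmin" using eig_bounds(3)[OF Psym] unfolding lmin_def by blast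
  have uu: "u \<bullet> u = 1" using u(1) by (simp add: power2_norm_eq_inner[symmetric])
  have eps_le: "\<epsilon> \<le> lmin"
  proof -
    have "0 \<le> u \<bullet> ((P - \<epsilon> *\<^sub>R mat 1) *v u)" using P_lmi unfolding psd_def by blast
    also have "u \<bullet> ((P - \<epsilon> *\<^sub>R mat 1) *v u) = lmin - \<epsilon>"
      using u(2) uu by (simp add: matrix_vector_mult_diff_rdistrib mv_scale inner_diff_right)
    finally show ?thesis by simp
  qed
  have lmin_pos: "0 < lmin" using eps_le eps_pos by simp
  have lmin_le: "lmin \<le> lmax" using hi[of u] u(2) uu by simp
  have lmax_pos: "0 < lmax" using lmin_pos lmin_le by simp
  have S2nn: "0 \<le> S2" unfolding S2_def spec_norm_def by (rule onorm_pos_le[OF matrix_vector_mul_bounded_linear])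
  have cs: "2 * (x \<bullet> (P *v y)) \<le> S2 * norm x * norm y" for x y
  proof -
    have "2 * (x \<bullet> (P *v y)) = x \<bullet> ((2 *\<^sub>R P) *v y)" by (simp add: mv_scale)
    also have "\<dots> \<le> norm x * norm ((2 *\<^sub>R P) *v y)" by (rule norm_cauchy_schwarz)
    also have "\<dots> \<le> norm x * (S2 * norm y)"
      unfolding S2_def spec_norm_def by (intro mult_left_mono onorm[OF matrix_vector_mul_bounded_linear]) simp
    finally show ?thesis by (simp add: mult_ac)
  qed
  define Kf where "Kf = (\<lambda>x. \<Sum>m\<in>UNIV. s m * ((R m *v x) \<bullet> (R m *v x)))"
  have Kf_nn: "0 \<le> Kf x" for x unfolding Kf_def using s_nonneg by (intro sum_nonneg mult_nonneg_nonneg) auto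
  have Ups_sq: "(\<Sum>m\<in>UNIV. s m * (Upsilon R x $ m)\<^sup>2) \<le> (x \<bullet> x) * Kf x" for x
  proof -
    have "(\<Sum>m\<in>UNIV. s m * (Upsilon R x $ m)\<^sup>2) \<le> (\<Sum>m\<in>UNIV. s m * ((x \<bullet> x) * ((R m *v x) \<bullet> (R m *v x))))"
    proof (rule sum_mono)
      fix m
      have "(Upsilon R x $ m)\<^sup>2 \<le> (x \<bullet> x) * ((R m *v x) \<bullet> (R m *v x))"
        unfolding Upsilon_def by (simp add: Cauchy_Schwarz_ineq)
      then show "s m * (Upsilon R x $ m)\<^sup>2 \<le> s m * ((x \<bullet> x) * ((R m *v x) \<bullet> (R m *v x)))"
        using s_nonneg[of m] by (rule mult_left_mono)
    qed
    also have "\<dots> = (x \<bullet> x) * Kf x" unfolding Kf_def by (simp add: sum_distrib_left mult_ac)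
    finally show ?thesis .
  qed
  have key: "2 * (x \<bullet> (P *v (L *v x))) + 2 * (x \<bullet> (P *v Upsilon R x)) \<le> - \<epsilon> * (x \<bullet> x) + ((x \<bullet> x) - \<delta>\<^sup>2) * Kf x" for x
  proof -
    have k1: "2 * (x \<bullet> (P *v (L *v x))) + \<epsilon> * (x \<bullet> x) + (\<Sum>m\<in>UNIV. s m * \<delta>\<^sup>2 * ((R m *v x) \<bullet> (R m *v x)))
     + 2 * (x \<bullet> (P *v Upsilon R x)) - (\<Sum>m\<in>UNIV. s m * (Upsilon R x $ m)\<^sup>2) \<le> 0"
      by (rule key_ineq[OF Rsym energy nvec Psym G_lmi])
    have "(\<Sum>m\<in>UNIV. s m * \<delta>\<^sup>2 * ((R m *v x) \<bullet> (R m *v x))) = \<delta>\<^sup>2 * Kf x"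
      unfolding Kf_def by (simp add: sum_distrib_left mult_ac)
    then show ?thesis using k1 Ups_sq[of x] by (simp add: algebra_simps)
  qed
  have sol': "a 0 = a0" "continuous_on {0..\<tau>} a"
    "\<forall>t\<in>{0..\<tau>}. ((\<lambda>s. L *v a s + Upsilon R (a s) + f s) has_integral (a t - a0)) {0..t}"
    using sol unfolding is_solution_def by auto
  define g where "g = (\<lambda>s. L *v a s + Upsilon R (a s) + f s)"
  have hint: "\<forall>t\<in>{0..\<tau>}. (g has_integral (a t - a0)) {0..t}" using sol'(3) unfolding g_def .
  obtain D where D: "finite D" "\<forall>t\<in>{0..\<tau>} - D. continuous (at t within {0..}) f"
    using f_pc tau_nonneg unfolding piecewise_continuous_def by blast
  define F0 where "F0 = (\<lambda>x. L *v x + Upsilon R x)"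
  have F0c: "continuous_on UNIV F0" unfolding F0_def
    by (intro continuous_on_add linear_continuous_on matrix_vector_mul_bounded_linear Ups_cont)
  have F0ac: "continuous_on {0..\<tau>} (\<lambda>s. F0 (a s))"
    by (rule continuous_on_compose2[OF F0c sol'(2)]) auto
  have geq: "g = (\<lambda>s. F0 (a s) + f s)" unfolding g_def F0_def by simp
  have gc: "continuous (at t within {0..\<tau>}) g" if t: "t \<in> {0..\<tau>} - D" for t
  proof -
    have "continuous (at t within {0..\<tau>}) (\<lambda>s. F0 (a s))"
      using F0ac t by (simp add: continuous_on_eq_continuous_within)
    moreover have "continuous (at t within {0..\<tau>}) f"
      by (rule continuous_within_subset[OF D(2)[rule_format, OF t]]) auto
    ultimately show ?thesis unfolding geq by (rule continuous_add)
  qed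
  have da: "(a has_vector_derivative g t) (at t)" if t: "t \<in> {0<..<\<tau>} - D" for t
    by (rule ode_deriv[OF hint D(1) t gc]) (use t in auto)
  define V where "V = (\<lambda>s. a s \<bullet> (P *v a s))"
  define V' where "V' = (\<lambda>s. 2 * (a s \<bullet> (P *v g s)))"
  have dV: "(V has_real_derivative V' t) (at t)" if t: "t \<in> {0<..<\<tau>} - D" for t
    unfolding V_def V'_def by (rule V_deriv[OF Psym da[OF t]])
  have Vc: "continuous_on {0..\<tau>} V"
    unfolding V_def by (rule continuous_on_compose2[OF cont_quad sol'(2)]) auto
  have Vlo: "lmin * (norm (a t))\<^sup>2 \<le> V t" for t unfolding V_def power2_norm_eq_inner by (rule lo)
  have Vhi: "V t \<le> lmax * (norm (a t))\<^sup>2" for t unfolding V_def power2_norm_eq_inner by (rule hi)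
  have Vnn: "0 \<le> V t" for t using Vlo[of t] lmin_pos by (smt (verit) mult_nonneg_nonneg zero_le_power2)
  define K where "K = (\<lambda>t. Kf (a t))"
  have V'bound: "V' t \<le> - \<epsilon> * (norm (a t))\<^sup>2 + ((norm (a t))\<^sup>2 - \<delta>\<^sup>2) * K t + S2 * norm (a t) * norm (f t)" for t
  proof -
    have "V' t = 2 * (a t \<bullet> (P *v (L *v a t))) + 2 * (a t \<bullet> (P *v Upsilon R (a t))) + 2 * (a t \<bullet> (P *v f t))"
      unfolding V'_def g_def by (simp add: matrix_vector_right_distrib inner_add_right algebra_simps)
    then show ?thesis using key[of "a t"] cs[of "a t" "f t"] unfolding K_def power2_norm_eq_inner by linarith
  qed
  define Vs where "Vs = lmin * \<delta>\<^sup>2"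
  have V0: "V 0 \<le> Vs"
  proof -
    have "norm a0 \<le> \<delta> * sqrt (lmin / lmax)" using a0_small unfolding lmin_def lmax_def .
    then have "(norm a0)\<^sup>2 \<le> (\<delta> * sqrt (lmin / lmax))\<^sup>2" by (rule power_mono) simp
    also have "\<dots> = \<delta>\<^sup>2 * (lmin / lmax)" using lmin_pos lmax_pos by (simp add: power_mult_distrib)
    finally have na: "(norm a0)\<^sup>2 \<le> \<delta>\<^sup>2 * (lmin / lmax)" .
    have "lmax * (norm a0)\<^sup>2 \<le> lmax * (\<delta>\<^sup>2 * (lmin / lmax))" using na lmax_pos by (intro mult_left_mono) auto
    also have "\<dots> = Vs" using lmax_pos by (simp add: Vs_def)
    finally show ?thesis using Vhi[of 0] sol'(1) by simp
  qed
  have Kc_cont: "continuous_on {0..\<tau>} K"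
  proof -
    have "continuous_on UNIV Kf" unfolding Kf_def
      by (intro continuous_on_sum continuous_on_mult continuous_on_const continuous_on_inner
          linear_continuous_on matrix_vector_mul_bounded_linear)
    then show ?thesis unfolding K_def by (rule continuous_on_compose2[OF _ sol'(2)]) auto
  qed
  obtain Kmax where Kmax: "\<And>t. t \<in> {0..\<tau>} \<Longrightarrow> K t \<le> Kmax"
    using continuous_attains_sup[OF compact_Icc _ Kc_cont] tau_nonneg by fastforce
  have Kmax_nn: "0 \<le> Kmax" using Kmax[of 0] Kf_nn[of "a 0"] tau_nonneg by (simp add: K_def)
  have fsm: "norm (f t) \<le> r" if "t \<in> {0..\<tau>}" for t
    using f_small that unfolding r_def lmin_def lmax_def S2_def by blast
  have S2r: "S2 * r \<le> lmin * \<epsilon> * \<delta> / lmax"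
  proof (cases "S2 = 0")
    case True then show ?thesis using lmin_pos lmax_pos eps_pos delta_pos by simp
  next
    case False then show ?thesis unfolding r_def by (simp add: field_simps)
  qed
  have boot: "\<forall>t\<in>{0..\<tau>}. V t \<le> Vs"
  proof (rule ccontr)
    assume "\<not> (\<forall>t\<in>{0..\<tau>}. V t \<le> Vs)"
    then obtain t1 where t1: "t1 \<in> {0..\<tau>}" "V t1 > Vs" by auto
    define A where "A = {0..t1} \<inter> V -` {..Vs}"
    have Acl: "closed A" unfolding A_def
      by (rule continuous_closed_preimage[OF continuous_on_subset[OF Vc] closed_atLeastAtMost closed_atMost]) (use t1 in auto)
    have A0: "0 \<in> A" using V0 t1 by (auto simp: A_def)
    have Abd: "bdd_above A" unfolding A_def by (rule bdd_aboveI[of _ t1]) auto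
    define t0 where "t0 = Sup A"
    have t0A: "t0 \<in> A" unfolding t0_def by (rule closed_contains_Sup[OF _ Abd Acl]) (use A0 in auto)
    then have t0: "0 \<le> t0" "t0 \<le> t1" "V t0 \<le> Vs" by (auto simp: A_def)
    have t01: "t0 < t1" using t0 t1 by (cases "t0 = t1") auto
    have above: "V s > Vs" if s: "s \<in> {t0<..t1}" for s
    proof (rule ccontr)
      assume "\<not> V s > Vs"
      then have "s \<in> A" using s t0 by (auto simp: A_def)
      then have "s \<le> t0" unfolding t0_def by (rule cSup_upper[OF _ Abd])
      then show False using s by auto
    qed
    define Kc where "Kc = Kmax / lmin"
    have Kc_nn: "0 \<le> Kc" using Kmax_nn lmin_pos by (simp add: Kc_def)
    define Z where "Z = (\<lambda>s. exp (- Kc * s) * (V s - Vs))"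
    define Z' where "Z' = (\<lambda>s. exp (- Kc * s) * (- Kc) * (V s - Vs) + exp (- Kc * s) * V' s)"
    have Zc: "continuous_on {t0..t1} Z" unfolding Z_def
      by (intro continuous_intros continuous_on_subset[OF Vc]) (use t0 t1 in auto)
    have sub: "s \<in> {0<..<\<tau>} - D" if "s \<in> {t0<..<t1} - D" for s using that t0 t1 by auto
    have dZ: "(Z has_real_derivative Z' s) (at s)" if s: "s \<in> {t0<..<t1} - D" for s
      unfolding Z_def Z'_def by (auto intro!: derivative_eq_intros dV[OF sub[OF s]] simp: algebra_simps)
    have Z'le: "Z' s \<le> 0" if s: "s \<in> {t0<..<t1} - D" for s
    proof -
      have s0: "s \<in> {0..\<tau>}" using sub[OF s] by auto
      have Vgt: "V s > Vs" using above s by auto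
      define n where "n = norm (a s)"
      have n0: "0 \<le> n" by (simp add: n_def)
      have b1: "V' s \<le> - \<epsilon> * n\<^sup>2 + (n\<^sup>2 - \<delta>\<^sup>2) * K s + S2 * n * norm (f s)"
        using V'bound[of s] unfolding n_def .
      have b2: "S2 * norm (f s) \<le> lmin * \<epsilon> * \<delta> / lmax"
        using mult_left_mono[OF fsm[OF s0] S2nn] S2r by linarith
      have b3: "S2 * n * norm (f s) \<le> n * (lmin * \<epsilon> * \<delta> / lmax)"
        using mult_left_mono[OF b2 n0] by (simp add: mult_ac)
      have nlow: "lmin * \<delta> / lmax \<le> n"
      proof (rule power2_le_imp_le[OF _ n0])
        have "Vs < lmax * n\<^sup>2" using Vgt Vhi[of s] unfolding n_def by linarith
        then have "lmin * \<delta>\<^sup>2 / lmax < n\<^sup>2" using lmax_pos unfolding Vs_def by (simp add: field_simps)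
        moreover have "(lmin * \<delta> / lmax)\<^sup>2 \<le> lmin * \<delta>\<^sup>2 / lmax"
        proof -
          have "(lmin * \<delta> / lmax)\<^sup>2 = (lmin / lmax) * (lmin * \<delta>\<^sup>2 / lmax)" by (simp add: power2_eq_square)
          also have "\<dots> \<le> 1 * (lmin * \<delta>\<^sup>2 / lmax)"
            using lmin_le lmin_pos lmax_pos by (intro mult_right_mono) auto
          finally show ?thesis by simp
        qed
        ultimately show "(lmin * \<delta> / lmax)\<^sup>2 \<le> n\<^sup>2" by simp
      qed
      have b4: "n * (lmin * \<epsilon> * \<delta> / lmax) \<le> \<epsilon> * n\<^sup>2"
      proof -
        have "n * (lmin * \<epsilon> * \<delta> / lmax) = (\<epsilon> * n) * (lmin * \<delta> / lmax)" by simp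
        also have "\<dots> \<le> (\<epsilon> * n) * n" using nlow eps_pos n0 by (intro mult_left_mono) auto
        finally show ?thesis by (simp add: power2_eq_square mult_ac)
      qed
      have b5: "(n\<^sup>2 - \<delta>\<^sup>2) * K s \<le> Kc * (V s - Vs)"
      proof (cases "n\<^sup>2 \<le> \<delta>\<^sup>2")
        case True
        have "(n\<^sup>2 - \<delta>\<^sup>2) * K s \<le> 0" using True Kf_nn[of "a s"] unfolding K_def by (simp add: mult_nonpos_nonneg)
        also have "0 \<le> Kc * (V s - Vs)" using Kc_nn Vgt by simp
        finally show ?thesis .
      next
        case False
        have "(n\<^sup>2 - \<delta>\<^sup>2) * K s \<le> (n\<^sup>2 - \<delta>\<^sup>2) * Kmax" using False Kmax[OF s0] by (intro mult_left_mono) auto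
        also have "\<dots> \<le> ((V s - Vs) / lmin) * Kmax"
        proof (rule mult_right_mono[OF _ Kmax_nn])
          have "lmin * n\<^sup>2 \<le> V s" using Vlo[of s] unfolding n_def .
          then show "n\<^sup>2 - \<delta>\<^sup>2 \<le> (V s - Vs) / lmin" using lmin_pos unfolding Vs_def by (simp add: field_simps)
        qed
        also have "\<dots> = Kc * (V s - Vs)" by (simp add: Kc_def)
        finally show ?thesis .
      qed
      have "V' s \<le> Kc * (V s - Vs)" using b1 b3 b4 b5 by linarith
      then have "exp (- Kc * s) * (V' s - Kc * (V s - Vs)) \<le> 0" by (simp add: mult_nonneg_nonpos)
      then show ?thesis unfolding Z'_def by (simp add: algebra_simps)
    qed
    have "Z t1 \<le> Z t0" by (rule ftc_decr[OF t0(2) D(1) Zc dZ Z'le])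
    moreover have "Z t0 \<le> 0" using t0(3) by (simp add: Z_def mult_nonneg_nonpos)
    moreover have "Z t1 > 0" using t1(2) by (simp add: Z_def)
    ultimately show False by simp
  qed
  have abound: "norm (a t) \<le> \<delta>" if t: "t \<in> {0..\<tau>}" for t
  proof -
    have "lmin * (norm (a t))\<^sup>2 \<le> lmin * \<delta>\<^sup>2" using Vlo[of t] boot t unfolding Vs_def by fastforce
    then have "(norm (a t))\<^sup>2 \<le> \<delta>\<^sup>2" using lmin_pos by simp
    then show ?thesis using delta_pos by (simp add: power2_le_iff_abs_le)
  qed
  define c where "c = \<epsilon> / (2 * lmax)"
  define k where "k = S2 / (2 * sqrt lmin)"
  have c_pos: "0 < c" using eps_pos lmax_pos by (simp add: c_def)
  have k_nn: "0 \<le> k" using S2nn lmin_pos by (simp add: k_def)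
  have sl: "sqrt lmin * sqrt lmin = lmin" using lmin_pos by simp
  have sl_pos: "0 < sqrt lmin" using lmin_pos by simp
  have anorm_sq: "(norm (a t))\<^sup>2 \<le> V t / lmin" for t using Vlo[of t] lmin_pos by (simp add: field_simps)
  have anorm_le: "norm (a t) \<le> sqrt (V t) / sqrt lmin" for t
    using real_le_rsqrt[OF anorm_sq[of t]] by (simp add: real_sqrt_divide)
  have Vineq: "V' t \<le> -2*c*V t + 2*k * sqrt(V t)*norm (f t)" if t: "t \<in> {0..\<tau>}" for t
  proof -
    define n where "n = norm (a t)"
    have n0: "0 \<le> n" by (simp add: n_def)
    have "n\<^sup>2 \<le> \<delta>\<^sup>2" using abound[OF t] n0 unfolding n_def by (simp add: power_mono)
    then have e1: "(n\<^sup>2 - \<delta>\<^sup>2) * K t \<le> 0" using Kf_nn[of "a t"] unfolding K_def by (simp add: mult_nonpos_nonneg)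
    have e2: "- \<epsilon> * n\<^sup>2 \<le> -2*c*V t"
    proof -
      have "(\<epsilon> / lmax) * V t \<le> (\<epsilon> / lmax) * (lmax * n\<^sup>2)" using Vhi[of t] eps_pos lmax_pos unfolding n_def by (intro mult_left_mono) auto
      also have "\<dots> = \<epsilon> * n\<^sup>2" using lmax_pos by simp
      finally show ?thesis unfolding c_def using lmax_pos by simp
    qed
    have e3: "S2 * n * norm (f t) \<le> 2*k * sqrt(V t)*norm (f t)"
    proof -
      have "S2 * n * norm (f t) \<le> S2 * (sqrt (V t) / sqrt lmin) * norm (f t)"
        using anorm_le[of t] S2nn unfolding n_def by (intro mult_right_mono mult_left_mono) auto
      also have "\<dots> = 2*k * sqrt(V t)*norm (f t)" unfolding k_def using sl_pos by simp
      finally show ?thesis .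
    qed
    show ?thesis using V'bound[of t] e1 e2 e3 unfolding n_def by linarith
  qed
  have gam: "(k/c) / sqrt lmin = lmax * S2 / (lmin * \<epsilon>)"
    unfolding k_def c_def using sl sl_pos lmax_pos eps_pos by (simp add: field_simps)
  have sqV0: "sqrt (V 0) / sqrt lmin \<le> norm a0 * sqrt (lmax / lmin)"
  proof -
    have "V 0 \<le> lmax * (norm a0)\<^sup>2" using Vhi[of 0] sol'(1) by simp
    then have "sqrt (V 0) \<le> sqrt lmax * norm a0" by (metis real_sqrt_le_mono real_sqrt_mult real_sqrt_abs abs_norm_cancel)
    then have "sqrt (V 0) / sqrt lmin \<le> sqrt lmax * norm a0 / sqrt lmin" using sl_pos by (simp add: divide_right_mono)
    also have "\<dots> = norm a0 * sqrt (lmax / lmin)" by (simp add: real_sqrt_divide)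
    finally show ?thesis .
  qed
  have Vnn': "\<And>t. t \<in> {0..\<tau>} \<Longrightarrow> 0 \<le> V t" using Vnn by blast
  have Vm': "\<And>t. t \<in> {0..\<tau>} \<Longrightarrow> V t \<le> Vs" using boot by blast
  have dV': "\<And>t. t \<in> {0<..<\<tau>} - D \<Longrightarrow> (V has_real_derivative V' t) (at t)" using dV by blast
  have Vineq': "\<And>t. t \<in> {0<..<\<tau>} - D \<Longrightarrow> V' t \<le> -2*c*V t + 2*k * sqrt(V t)*norm (f t)"
    using Vineq by auto
  have r_nn: "0 \<le> r" unfolding r_def using lmin_pos lmax_pos eps_pos delta_pos S2nn by simp
  define Phi where "Phi = Linf_norm (trunc \<tau> f)"
  have bddf: "bdd_above ((\<lambda>t. norm (trunc \<tau> f t)) ` {0..})"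
    by (rule bdd_aboveI[of _ r]) (use fsm r_nn in \<open>auto simp: trunc_def\<close>)
  have phiPhi: "norm (f t) \<le> Phi" if t: "t \<in> {0..\<tau>}" for t
  proof -
    have "norm (trunc \<tau> f t) \<le> Phi" unfolding Phi_def Linf_norm_def by (rule cSUP_upper[OF _ bddf]) (use t in auto)
    then show ?thesis using t by (simp add: trunc_def)
  qed
  have Phi_nn: "0 \<le> Phi"
  proof -
    have "norm (f 0) \<le> Phi" using phiPhi[of 0] tau_nonneg by simp
    moreover have "0 \<le> norm (f 0)" by simp
    ultimately show ?thesis by linarith
  qed
  have aLinf: "norm (a t) \<le> (lmax * S2 / (lmin * \<epsilon>)) * Phi + norm a0 * sqrt (lmax / lmin)" if t: "t \<in> {0..\<tau>}" for t
  proof -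
    have "sqrt (V t) \<le> sqrt (V 0) + (k/c) * Phi"
      by (rule scalar_Linf[OF tau_nonneg D(1) Vc Vnn' dV' Vineq' c_pos k_nn _ t]) (use phiPhi in auto)
    then have "sqrt (V t) / sqrt lmin \<le> (sqrt (V 0) + (k/c) * Phi) / sqrt lmin"
      using sl_pos by (simp add: divide_right_mono)
    also have "\<dots> = sqrt (V 0) / sqrt lmin + ((k/c) / sqrt lmin) * Phi" using c_pos sl_pos by (simp add: field_simps)
    finally show ?thesis using anorm_le[of t] sqV0 unfolding gam by linarith
  qed
  have Linf: "Linf_norm (trunc \<tau> a) \<le> (lmax * S2 / (lmin * \<epsilon>)) * Phi + norm a0 * sqrt (lmax / lmin) * 1"
    unfolding Linf_norm_def
  proof (rule cSUP_least)
    show "{0::real..} \<noteq> {}" by auto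
    fix t :: real assume "t \<in> {0..}"
    have rhs_nn: "0 \<le> (lmax * S2 / (lmin * \<epsilon>)) * Phi + norm a0 * sqrt (lmax / lmin)"
      using lmax_pos lmin_pos eps_pos S2nn Phi_nn by simp
    show "norm (trunc \<tau> a t) \<le> (lmax * S2 / (lmin * \<epsilon>)) * Phi + norm a0 * sqrt (lmax / lmin) * 1"
      using aLinf[of t] rhs_nn \<open>t \<in> {0..}\<close> by (auto simp: trunc_def)
  qed
  have Lp: "Lp_norm p (trunc \<tau> a) \<le> (lmax * S2 / (lmin * \<epsilon>)) * Lp_norm p (trunc \<tau> f)
      + norm a0 * sqrt (lmax / lmin) * (2 * lmax / (\<epsilon> * p)) powr (1 / p)" if p: "p \<ge> 1" for p :: real
  proof -
    have p0: "p > 0" using p by simp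
    have ai: "(\<lambda>t. norm (a t) powr p) integrable_on {0..\<tau>}"
      by (rule integrable_continuous_interval[OF continuous_on_powr'[OF continuous_on_norm[OF sol'(2)] continuous_on_const]])
         (use p0 in auto)
    have gi: "g integrable_on {0..\<tau>}" using hint tau_nonneg by auto
    have F0i: "(\<lambda>s. F0 (a s)) integrable_on {0..\<tau>}" by (rule integrable_continuous_interval[OF F0ac])
    have "(\<lambda>s. g s - F0 (a s)) integrable_on {0..\<tau>}" by (rule integrable_diff[OF gi F0i])
    moreover have "(\<lambda>s. g s - F0 (a s)) = f" unfolding geq by auto
    ultimately have fi: "f integrable_on {0..\<tau>}" by simp
    have phint: "(\<lambda>t. norm (f t) powr p) integrable_on {0..\<tau>}" by (rule powr_int_bounded[OF fi fsm p0])
    have LPa: "Lp_norm p (trunc \<tau> a) = (integral {0..\<tau>} (\<lambda>t. norm (a t) powr p)) powr (1/p)" by (rule Lp_trunc[OF p0 ai])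
    have LPf: "Lp_norm p (trunc \<tau> f) = (integral {0..\<tau>} (\<lambda>t. norm (f t) powr p)) powr (1/p)" by (rule Lp_trunc[OF p0 phint])
    define IV where "IV = integral {0..\<tau>} (\<lambda>t. V t powr (p/2))"
    define Fp where "Fp = Lp_norm p (trunc \<tau> f)"
    have SL: "IV powr (1/p) \<le> (k/c) * Fp + (1/(c*p)) powr (1/p) * sqrt (V 0)"
      unfolding IV_def Fp_def LPf
      by (rule scalar_Lp[OF tau_nonneg D(1) Vc Vnn' Vm' dV' Vineq' c_pos k_nn _ phint p]) auto
    have Vpint: "(\<lambda>t. V t powr (p/2)) integrable_on {0..\<tau>}"
      by (rule integrable_continuous_interval[OF continuous_on_powr'[OF Vc continuous_on_const]]) (use Vnn p0 in auto)
    define lq where "lq = 1 / lmin powr (p/2)"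
    have lq_nn: "0 \<le> lq" by (simp add: lq_def)
    have pt: "norm (a t) powr p \<le> lq * V t powr (p/2)" for t
    proof -
      have "norm (a t) powr p \<le> sqrt (V t / lmin) powr p"
        using anorm_le[of t] p0 by (intro powr_mono2) (auto simp: real_sqrt_divide)
      also have "sqrt (V t / lmin) = (V t / lmin) powr (1/2)" using Vnn[of t] lmin_pos by (simp add: powr_half_sqrt)
      also have "((V t / lmin) powr (1/2)) powr p = (V t / lmin) powr (p/2)" by (simp add: powr_powr)
      also have "\<dots> = lq * V t powr (p/2)" unfolding lq_def by (simp add: powr_divide)
      finally show ?thesis .
    qed
    have Ia: "integral {0..\<tau>} (\<lambda>t. norm (a t) powr p) \<le> lq * IV"
      unfolding IV_def
      by (rule has_integral_le[OF integrable_integral[OF ai] has_integral_mult_right[OF integrable_integral[OF Vpint]]])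
         (use pt in auto)
    have Ia_nn: "0 \<le> integral {0..\<tau>} (\<lambda>t. norm (a t) powr p)" by (rule integral_nonneg[OF ai]) auto
    have IV_nn: "0 \<le> IV" unfolding IV_def by (rule integral_nonneg[OF Vpint]) auto
    have lqp: "lq powr (1/p) = 1 / sqrt lmin"
    proof -
      have "lq powr (1/p) = 1 / (lmin powr (p/2)) powr (1/p)" unfolding lq_def by (simp add: powr_divide)
      also have "(lmin powr (p/2)) powr (1/p) = lmin powr (1/2)" using p0 by (simp add: powr_powr)
      also have "\<dots> = sqrt lmin" using lmin_pos by (simp add: powr_half_sqrt)
      finally show ?thesis .
    qed
    have "Lp_norm p (trunc \<tau> a) \<le> (lq * IV) powr (1/p)"
      unfolding LPa using Ia Ia_nn p0 by (intro powr_mono2) auto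
    also have "\<dots> = lq powr (1/p) * IV powr (1/p)" by (rule powr_mult)
    also have "\<dots> = IV powr (1/p) / sqrt lmin" unfolding lqp by simp
    also have "\<dots> \<le> ((k/c) * Fp + (1/(c*p)) powr (1/p) * sqrt (V 0)) / sqrt lmin"
      using SL sl_pos by (simp add: divide_right_mono)
    also have "\<dots> = ((k/c) / sqrt lmin) * Fp + (1/(c*p)) powr (1/p) * (sqrt (V 0) / sqrt lmin)"
      using c_pos sl_pos by (simp add: field_simps)
    also have "\<dots> \<le> ((k/c) / sqrt lmin) * Fp + (1/(c*p)) powr (1/p) * (norm a0 * sqrt (lmax / lmin))"
      using sqV0 by (intro add_left_mono mult_left_mono) auto
    also have "1/(c*p) = 2 * lmax / (\<epsilon> * p)" unfolding c_def using lmax_pos eps_pos p0 by (simp add: field_simps)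
    finally show ?thesis unfolding gam Fp_def by (simp add: mult_ac)
  qed
  have first: "\<forall>t\<in>{0..\<tau>}. norm (a t) \<le> \<delta>" using abound by blast
  show ?thesis
    unfolding lmin_def[symmetric] lmax_def[symmetric] S2_def[symmetric]
    using first Lp Linf unfolding Phi_def by blast
qed

end
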